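(* Consider the ARCH($p$) model $\xi_t=(b_0^2+b_1^2\xi_{t-1}^2+\dots+b_p^2\xi_{t-p}^2)^{1/2}e_t$ with $b_0>0$ and $b_i>0$ for $i=1,\dots,p$, satisfying Assumptions A.1 and A.2. Let $B_t$ be the $p\times p$ random matrix with first row $(b_1^2e_t^2,b_2^2e_t^2,\dots,b_p^2e_t^2)$, ones on the subdiagonal ($(B_t)_{i+1,i}=1$, $i=1,\dots,p-1$) and zeros elsewhere; let $M_t=B_t\cdots B_1$ and $\gamma=\lim_{t\to\infty}\frac1tE(\log\|M_t\|)$ (for any matrix norm). Let $\rho$ be the quantity defined below for this model. Then $2\log\rho=\gamma$.
   Context: For this model the homogeneous part is $a^*\equiv0$, $b^*(x)=(b_1^2x_1^2+\dots+b_p^2x_p^2)^{1/2}$. A.1: $e_t$ i.i.d. with Lebesgue density $f$ locally bounded away from $0$. A.2: $\sup_u(1+|u|)f(u)<\infty$ and $E|e_1|^{r_0}<\infty$ for some $r_0>0$. $\|\cdot\|$ Euclidean on $\mathbb{R}^p$, $\Theta=\{\theta:\|\theta\|=1\}$. $z(x,u)=b^*(x)u$, $w(x,u)=\|(z(x,u),x_1,\dots,x_{p-1})\|$; the collapsed chain on $\Theta$ is $\theta_t^*=(z(\theta^*_{t-1},e_t),\theta^*_{t-1,1},\dots,\theta^*_{t-1,p-1})/w(\theta^*_{t-1},e_t)$, with stationary distribution $\Pi$, and $\rho=\exp\big(\int_\Theta\int_{\mathbb{R}}\log w(\theta,u)f(u)\,du\,\Pi(d\theta)\big)$. *)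

theory Defs
  imports "HOL-Probability.Probability"
begin

text \<open>Conventions: vectors in R^p are functions nat => real, component i (0-based)
 standing for the paper's component i+1; as elements of the product space
 PiM {..<p} (%_. lborel) they are extensional (undefined outside {..<p}).
 Coefficients b :: nat => real with b i for the paper's b_i (i = 0..p).
 p x p matrices are functions nat => nat => real with indices in {..<p}.\<close>

definition state_space :: "nat \<Rightarrow> (nat \<Rightarrow> real) measure" where
  "state_space p = PiM {..<p} (\<lambda>_. lborel)"

definition vnorm :: "nat \<Rightarrow> (nat \<Rightarrow> real) \<Rightarrow> real" where
  "vnorm p x = sqrt (\<Sum>i<p. (x i)\<^sup>2)"

definition Theta :: "nat \<Rightarrow> (nat \<Rightarrow> real) set" where
  "Theta p = {x \<in> space (state_space p). vnorm p x = 1}"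

definition bstar :: "nat \<Rightarrow> (nat \<Rightarrow> real) \<Rightarrow> (nat \<Rightarrow> real) \<Rightarrow> real" where
  "bstar p b x = sqrt (\<Sum>i<p. (b (Suc i))\<^sup>2 * (x i)\<^sup>2)"

definition zfun :: "nat \<Rightarrow> (nat \<Rightarrow> real) \<Rightarrow> (nat \<Rightarrow> real) \<Rightarrow> real \<Rightarrow> real" where
  "zfun p b x u = bstar p b x * u"

definition shiftvec :: "nat \<Rightarrow> (nat \<Rightarrow> real) \<Rightarrow> (nat \<Rightarrow> real) \<Rightarrow> real \<Rightarrow> (nat \<Rightarrow> real)" where
  "shiftvec p b x u = restrict (\<lambda>i. if i = 0 then zfun p b x u else x (i - 1)) {..<p}"

definition wfun :: "nat \<Rightarrow> (nat \<Rightarrow> real) \<Rightarrow> (nat \<Rightarrow> real) \<Rightarrow> real \<Rightarrow> real" where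
  "wfun p b x u = vnorm p (shiftvec p b x u)"

definition chain_step :: "nat \<Rightarrow> (nat \<Rightarrow> real) \<Rightarrow> (nat \<Rightarrow> real) \<Rightarrow> real \<Rightarrow> (nat \<Rightarrow> real)" where
  "chain_step p b x u = restrict (\<lambda>i. shiftvec p b x u i / wfun p b x u) {..<p}"

definition stationary_dist ::
  "nat \<Rightarrow> (nat \<Rightarrow> real) \<Rightarrow> (real \<Rightarrow> real) \<Rightarrow> (nat \<Rightarrow> real) measure \<Rightarrow> bool" where
  "stationary_dist p b f Stat \<longleftrightarrow>
     sets Stat = sets (state_space p) \<and> prob_space Stat \<and> emeasure Stat (Theta p) = 1 \<and>
     (\<forall>A \<in> sets (state_space p).
        emeasure Stat A = (\<integral>\<^sup>+ x. (\<integral>\<^sup>+ u. ennreal (f u) * indicator A (chain_step p b x u) \<partial>lborel) \<partial>Stat))"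

definition rho :: "nat \<Rightarrow> (nat \<Rightarrow> real) \<Rightarrow> (real \<Rightarrow> real) \<Rightarrow> (nat \<Rightarrow> real) measure \<Rightarrow> real" where
  "rho p b f Stat = exp (\<integral>x. (\<integral>u. ln (wfun p b x u) * f u \<partial>lborel) \<partial>Stat)"

definition matmul :: "nat \<Rightarrow> (nat \<Rightarrow> nat \<Rightarrow> real) \<Rightarrow> (nat \<Rightarrow> nat \<Rightarrow> real) \<Rightarrow> (nat \<Rightarrow> nat \<Rightarrow> real)" where
  "matmul p A B = (\<lambda>i j. \<Sum>k<p. A i k * B k j)"

definition idmat :: "nat \<Rightarrow> nat \<Rightarrow> real" where
  "idmat = (\<lambda>i j. if i = j then 1 else 0)"

definition frob :: "nat \<Rightarrow> (nat \<Rightarrow> nat \<Rightarrow> real) \<Rightarrow> real" where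
  "frob p A = sqrt (\<Sum>i<p. \<Sum>j<p. (A i j)\<^sup>2)"

definition Bmat :: "nat \<Rightarrow> (nat \<Rightarrow> real) \<Rightarrow> real \<Rightarrow> (nat \<Rightarrow> nat \<Rightarrow> real)" where
  "Bmat p b e = (\<lambda>i j. if i = 0 then (b (Suc j))\<^sup>2 * e\<^sup>2
                      else if j = i - 1 then 1 else 0)"

fun Mprod :: "nat \<Rightarrow> (nat \<Rightarrow> real) \<Rightarrow> (nat \<Rightarrow> real) \<Rightarrow> nat \<Rightarrow> (nat \<Rightarrow> nat \<Rightarrow> real)" where
  "Mprod p b es 0 = idmat"
| "Mprod p b es (Suc t) = matmul p (Bmat p b (es (Suc t))) (Mprod p b es t)"

end

theory Submission
  imports Defs
begin

definition mv :: "nat \<Rightarrow> (nat \<Rightarrow> nat \<Rightarrow> real) \<Rightarrow> (nat \<Rightarrow> real) \<Rightarrow> nat \<Rightarrow> real" where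
  "mv p A v = (\<lambda>i. \<Sum>j<p. A i j * v j)"

definition sqv :: "(nat \<Rightarrow> real) \<Rightarrow> nat \<Rightarrow> real" where
  "sqv x = (\<lambda>i. (x i)\<^sup>2)"

fun th :: "nat \<Rightarrow> (nat \<Rightarrow> real) \<Rightarrow> (nat \<Rightarrow> real) \<Rightarrow> (nat \<Rightarrow> real) \<Rightarrow> nat \<Rightarrow> (nat \<Rightarrow> real)" where
  "th p b x es 0 = x"
| "th p b x es (Suc n) = chain_step p b (th p b x es n) (es (Suc n))"

lemma mv_matmul: "mv p (matmul p A B) v i = mv p A (mv p B v) i"
proof -
  have "mv p (matmul p A B) v i = (\<Sum>j<p. \<Sum>k<p. A i k * B k j * v j)"
    unfolding mv_def matmul_def by (simp add: sum_distrib_right)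
  also have "\<dots> = (\<Sum>k<p. \<Sum>j<p. A i k * B k j * v j)" by (rule sum.swap)
  also have "\<dots> = mv p A (mv p B v) i"
    unfolding mv_def by (simp add: sum_distrib_left mult.assoc)
  finally show ?thesis .
qed

lemma bstar_sq: "(bstar p b x)\<^sup>2 = (\<Sum>i<p. (b (Suc i))\<^sup>2 * (x i)\<^sup>2)"
  unfolding bstar_def by (simp add: sum_nonneg)

lemma vnorm_sq: "(vnorm p x)\<^sup>2 = (\<Sum>i<p. (x i)\<^sup>2)"
  unfolding vnorm_def by (simp add: sum_nonneg)

lemma wsq:
  assumes "1 \<le> p"
  shows "(wfun p b x u)\<^sup>2 = (bstar p b x)\<^sup>2 * u\<^sup>2 + (\<Sum>j<p-1. (x j)\<^sup>2)"
proof -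
  obtain q where q: "p = Suc q" using assms by (cases p) auto
  have "(wfun p b x u)\<^sup>2 = (\<Sum>i<p. (shiftvec p b x u i)\<^sup>2)"
    unfolding wfun_def vnorm_sq ..
  also have "\<dots> = (\<Sum>i<Suc q. (shiftvec p b x u i)\<^sup>2)" using q by simp
  also have "\<dots> = (shiftvec p b x u 0)\<^sup>2 + (\<Sum>i<q. (shiftvec p b x u (Suc i))\<^sup>2)"
    by (subst sum.lessThan_Suc_shift) simp
  also have "\<dots> = (bstar p b x)\<^sup>2 * u\<^sup>2 + (\<Sum>j<p-1. (x j)\<^sup>2)"
    using q by (simp add: shiftvec_def zfun_def power_mult_distrib)
  finally show ?thesis .
qed

lemma wfun_nonneg: "wfun p b x u \<ge> 0"
  unfolding wfun_def vnorm_def by (simp add: sum_nonneg)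

lemma wfun_zero:
  assumes "wfun p b x u = 0" "i < p"
  shows "shiftvec p b x u i = 0"
proof -
  have "(\<Sum>i<p. (shiftvec p b x u i)\<^sup>2) = 0"
    using assms(1) unfolding wfun_def vnorm_def by simp
  then have "\<forall>i\<in>{..<p}. (shiftvec p b x u i)\<^sup>2 = 0"
    by (subst sum_nonneg_eq_0_iff[symmetric]) auto
  then show ?thesis using assms(2) by simp
qed

lemma Bstep:
  assumes "i < p"
  shows "mv p (Bmat p b u) (sqv x) i = (wfun p b x u)\<^sup>2 * (chain_step p b x u i)\<^sup>2"
proof -
  have "mv p (Bmat p b u) (sqv x) i = (shiftvec p b x u i)\<^sup>2"
  proof (cases "i = 0")
    case True
    then show ?thesis using assms
      by (simp add: mv_def Bmat_def sqv_def shiftvec_def zfun_def power_mult_distrib bstar_sq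
          sum_distrib_left mult_ac)
  next
    case False
    then have "mv p (Bmat p b u) (sqv x) i = (\<Sum>j<p. (if j = i - 1 then (x j)\<^sup>2 else 0))"
      unfolding mv_def Bmat_def sqv_def using False by (intro sum.cong) auto
    also have "\<dots> = (x (i-1))\<^sup>2" using assms by (simp add: sum.delta)
    finally show ?thesis using False assms by (simp add: shiftvec_def)
  qed
  also have "\<dots> = (wfun p b x u)\<^sup>2 * (chain_step p b x u i)\<^sup>2"
  proof (cases "wfun p b x u = 0")
    case True
    then show ?thesis using wfun_zero[OF True assms] by simp
  next
    case False
    then show ?thesis using assms by (simp add: chain_step_def power_divide)
  qed
  finally show ?thesis .
qed


locale arch =
  fixes p :: nat and b :: "nat \<Rightarrow> real"
  assumes p1: "1 \<le> p" and bpos: "\<And>i. i \<le> p \<Longrightarrow> b i > 0"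
begin

definition cmin :: real where "cmin = Min ((\<lambda>j. (b (Suc j))\<^sup>2) ` {..<p})"
definition Ssum :: real where "Ssum = (\<Sum>j<p. (b (Suc j))\<^sup>2)"
definition beta :: "real \<Rightarrow> real" where "beta u = 1 + Ssum * u\<^sup>2"
definition gam :: "real \<Rightarrow> real" where "gam u = min 1 (cmin * u\<^sup>2)"
definition Kp :: "real \<Rightarrow> real" where "Kp u = ln (real p * beta u) - ln (gam u)"

lemma cmin_le: "j < p \<Longrightarrow> cmin \<le> (b (Suc j))\<^sup>2"
  unfolding cmin_def by (rule Min_le) auto

lemma cmin_pos: "cmin > 0"
proof -
  have "cmin \<in> (\<lambda>j. (b (Suc j))\<^sup>2) ` {..<p}"
    unfolding cmin_def using p1 by (intro Min_in) (auto simp: lessThan_empty_iff)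
  then obtain j where "j < p" "cmin = (b (Suc j))\<^sup>2" by auto
  moreover have "b (Suc j) > 0" using bpos \<open>j < p\<close> by simp
  ultimately show ?thesis by simp
qed

lemma le_Ssum: "j < p \<Longrightarrow> (b (Suc j))\<^sup>2 \<le> Ssum"
  unfolding Ssum_def by (rule member_le_sum) auto

lemma Ssum_nonneg: "Ssum \<ge> 0"
  unfolding Ssum_def by (simp add: sum_nonneg)

lemma beta_ge1: "beta u \<ge> 1"
  unfolding beta_def using Ssum_nonneg by simp

lemma gam_le1: "gam u \<le> 1" unfolding gam_def by simp
lemma gam_nonneg: "gam u \<ge> 0" unfolding gam_def using cmin_pos by simp
lemma gam_pos: "u \<noteq> 0 \<Longrightarrow> gam u > 0" unfolding gam_def using cmin_pos by simp

lemma Kp_nonneg: "Kp u \<ge> 0"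
proof -
  have "1 \<le> real p" using p1 by simp
  then have "1 * 1 \<le> real p * beta u" using beta_ge1[of u] by (intro mult_mono) auto
  then have "real p * beta u \<ge> 1" by simp
  then have "ln (real p * beta u) \<ge> 0" by simp
  moreover have "ln (gam u) \<le> 0" using gam_le1[of u] gam_nonneg[of u]
    by (cases "gam u = 0") auto
  ultimately show ?thesis unfolding Kp_def by simp
qed

lemma Theta_sum: "x \<in> Theta p \<Longrightarrow> (\<Sum>i<p. (x i)\<^sup>2) = 1"
  unfolding Theta_def using vnorm_sq[of p x] by auto

lemma bstar_lower: "x \<in> Theta p \<Longrightarrow> (bstar p b x)\<^sup>2 \<ge> cmin"
proof -
  assume x: "x \<in> Theta p"
  have "cmin = (\<Sum>i<p. cmin * (x i)\<^sup>2)" using Theta_sum[OF x] by (simp add: sum_distrib_left[symmetric])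
  also have "\<dots> \<le> (\<Sum>i<p. (b (Suc i))\<^sup>2 * (x i)\<^sup>2)"
    by (intro sum_mono mult_right_mono cmin_le) auto
  finally show ?thesis by (simp add: bstar_sq)
qed

lemma bstar_upper: "x \<in> Theta p \<Longrightarrow> (bstar p b x)\<^sup>2 \<le> Ssum"
proof -
  assume x: "x \<in> Theta p"
  have xi: "i < p \<Longrightarrow> (x i)\<^sup>2 \<le> 1" for i
    using Theta_sum[OF x] member_le_sum[of i "{..<p}" "\<lambda>i. (x i)\<^sup>2"] by auto
  have "(\<Sum>i<p. (b (Suc i))\<^sup>2 * (x i)\<^sup>2) \<le> (\<Sum>i<p. (b (Suc i))\<^sup>2)"
    by (intro sum_mono) (use xi in \<open>auto intro: mult_left_le\<close>)
  then show ?thesis by (simp add: bstar_sq Ssum_def)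
qed

lemma w_lower: "x \<in> Theta p \<Longrightarrow> (wfun p b x u)\<^sup>2 \<ge> cmin * u\<^sup>2"
proof -
  assume x: "x \<in> Theta p"
  have "cmin * u\<^sup>2 \<le> (bstar p b x)\<^sup>2 * u\<^sup>2"
    using bstar_lower[OF x] by (intro mult_right_mono) auto
  also have "\<dots> \<le> (wfun p b x u)\<^sup>2" using wsq[OF p1] by (simp add: sum_nonneg)
  finally show ?thesis .
qed

lemma w_upper: "x \<in> Theta p \<Longrightarrow> (wfun p b x u)\<^sup>2 \<le> Ssum * u\<^sup>2 + 1"
proof -
  assume x: "x \<in> Theta p"
  have "(\<Sum>j<p-1. (x j)\<^sup>2) \<le> (\<Sum>j<p. (x j)\<^sup>2)"
    by (intro sum_mono2) auto
  then have "(\<Sum>j<p-1. (x j)\<^sup>2) \<le> 1" using Theta_sum[OF x] by simp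
  moreover have "(bstar p b x)\<^sup>2 * u\<^sup>2 \<le> Ssum * u\<^sup>2"
    using bstar_upper[OF x] by (intro mult_right_mono) auto
  ultimately show ?thesis using wsq[OF p1, of b x u] by simp
qed

lemma w_pos: "x \<in> Theta p \<Longrightarrow> u \<noteq> 0 \<Longrightarrow> wfun p b x u > 0"
proof -
  assume x: "x \<in> Theta p" and u: "u \<noteq> 0"
  have "0 < cmin * u\<^sup>2" using cmin_pos u by simp
  also have "\<dots> \<le> (wfun p b x u)\<^sup>2" by (rule w_lower[OF x])
  finally show ?thesis using wfun_nonneg[of p b x u]
    by (metis less_eq_real_def power_eq_0_iff zero_less_power2)
qed

lemma step_Theta:
  assumes x: "x \<in> Theta p" and u: "u \<noteq> 0"
  shows "chain_step p b x u \<in> Theta p"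
proof -
  have w: "wfun p b x u > 0" by (rule w_pos[OF x u])
  have "(\<Sum>i<p. (chain_step p b x u i)\<^sup>2) = (\<Sum>i<p. (shiftvec p b x u i)\<^sup>2 / (wfun p b x u)\<^sup>2)"
    unfolding chain_step_def by (intro sum.cong) (auto simp: power_divide)
  also have "\<dots> = (wfun p b x u)\<^sup>2 / (wfun p b x u)\<^sup>2"
    unfolding sum_divide_distrib[symmetric] wfun_def vnorm_sq ..
  also have "\<dots> = 1" using w by simp
  finally have "vnorm p (chain_step p b x u) = 1"
    by (simp add: vnorm_def)
  moreover have "chain_step p b x u \<in> space (state_space p)"
    unfolding chain_step_def state_space_def space_PiM by auto
  ultimately show ?thesis unfolding Theta_def by auto
qed

lemma th_Theta:
  assumes x: "x \<in> Theta p" and es: "\<forall>s\<in>{1..n}. es s \<noteq> 0"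
  shows "th p b x es n \<in> Theta p"
  using es
proof (induction n)
  case 0 then show ?case using x by simp
next
  case (Suc n)
  then show ?case by (simp add: step_Theta)
qed

lemma MSTEP:
  assumes "i < p"
  shows "mv p (Mprod p b es n) (sqv x) i =
    (\<Prod>s<n. (wfun p b (th p b x es s) (es (Suc s)))\<^sup>2) * (th p b x es n i)\<^sup>2"
  using assms
proof (induction n arbitrary: i)
  case 0
  have "(\<Sum>j<p. (if i = j then 1 else 0) * (x j)\<^sup>2) = (\<Sum>j<p. if i = j then (x j)\<^sup>2 else 0)"
    by (intro sum.cong) auto
  then show ?case using 0 by (simp add: mv_def idmat_def sqv_def)
next
  case (Suc n)
  let ?P = "\<Prod>s<n. (wfun p b (th p b x es s) (es (Suc s)))\<^sup>2"
  have "mv p (Mprod p b es (Suc n)) (sqv x) i = mv p (Bmat p b (es (Suc n))) (mv p (Mprod p b es n) (sqv x)) i"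
    by (simp add: mv_matmul)
  also have "\<dots> = mv p (Bmat p b (es (Suc n))) (\<lambda>j. ?P * sqv (th p b x es n) j) i"
    unfolding mv_def[of p "Bmat p b (es (Suc n))"] using Suc.IH by (intro sum.cong) (auto simp: sqv_def)
  also have "\<dots> = ?P * mv p (Bmat p b (es (Suc n))) (sqv (th p b x es n)) i"
    unfolding mv_def by (simp add: sum_distrib_left mult_ac)
  also have "\<dots> = ?P * ((wfun p b (th p b x es n) (es (Suc n)))\<^sup>2 * (th p b x es (Suc n) i)\<^sup>2)"
    using Bstep[OF Suc.prems] by simp
  finally show ?case by (simp add: mult_ac)
qed

lemma LA1:
  assumes x: "x \<in> Theta p" and es: "\<forall>s\<in>{1..n}. es s \<noteq> 0"
  shows "(\<Sum>i<p. mv p (Mprod p b es n) (sqv x) i) > 0"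
    and "ln (\<Sum>i<p. mv p (Mprod p b es n) (sqv x) i) =
         2 * (\<Sum>s<n. ln (wfun p b (th p b x es s) (es (Suc s))))"
proof -
  let ?w = "\<lambda>s. wfun p b (th p b x es s) (es (Suc s))"
  have wpos: "s < n \<Longrightarrow> ?w s > 0" for s
    using th_Theta[OF x, where es=es and n=s] es by (intro w_pos) auto
  have wne: "s < n \<Longrightarrow> ?w s \<noteq> 0" for s using wpos[of s] by simp
  have "(\<Sum>i<p. mv p (Mprod p b es n) (sqv x) i) = (\<Prod>s<n. (?w s)\<^sup>2) * (\<Sum>i<p. (th p b x es n i)\<^sup>2)"
    by (simp add: MSTEP sum_distrib_left)
  also have "\<dots> = (\<Prod>s<n. (?w s)\<^sup>2)"
    using Theta_sum[OF th_Theta[OF x es]] by simp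
  finally have eq: "(\<Sum>i<p. mv p (Mprod p b es n) (sqv x) i) = (\<Prod>s<n. (?w s)\<^sup>2)" .
  show "(\<Sum>i<p. mv p (Mprod p b es n) (sqv x) i) > 0"
    unfolding eq
  proof (intro prod_pos)
    fix s assume "s \<in> {..<n}"
    then show "0 < (?w s)\<^sup>2" using wpos[of s] by auto
  qed
  have "ln (\<Prod>s<n. (?w s)\<^sup>2) = (\<Sum>s<n. ln ((?w s)\<^sup>2))"
    using wne by (intro ln_prod) auto
  also have "\<dots> = (\<Sum>s<n. 2 * ln (?w s))"
    using wpos wne by (intro sum.cong) (auto simp: ln_realpow)
  finally show "ln (\<Sum>i<p. mv p (Mprod p b es n) (sqv x) i) = 2 * (\<Sum>s<n. ln (?w s))"
    unfolding eq by (simp add: sum_distrib_left)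
qed

end

lemma entry_le_frob:
  assumes "i < p" "j < p"
  shows "\<bar>A i j\<bar> \<le> frob p A"
proof -
  have "(A i j)\<^sup>2 \<le> (\<Sum>j'<p. (A i j')\<^sup>2)"
    using assms by (intro member_le_sum) auto
  also have "\<dots> \<le> (\<Sum>i'<p. \<Sum>j'<p. (A i' j')\<^sup>2)"
    using assms by (intro member_le_sum[of i "{..<p}" "\<lambda>i'. \<Sum>j'<p. (A i' j')\<^sup>2"]) (auto intro: sum_nonneg)
  finally show ?thesis unfolding frob_def
    by (metis real_sqrt_abs real_sqrt_le_mono)
qed

lemma LA2:
  assumes v: "\<forall>j<p. v j \<ge> 0" "(\<Sum>j<p. v j) = 1"
  shows "(\<Sum>i<p. mv p A v i) \<le> real p * frob p A"
proof -
  have "(\<Sum>i<p. mv p A v i) \<le> (\<Sum>i<p. \<Sum>j<p. frob p A * v j)"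
    unfolding mv_def
  proof (intro sum_mono)
    fix i j assume "i \<in> {..<p}" "j \<in> {..<p}"
    then have "A i j \<le> frob p A" using entry_le_frob[of i p j A] by auto
    then show "A i j * v j \<le> frob p A * v j" using v \<open>j \<in> {..<p}\<close> by (intro mult_right_mono) auto
  qed
  also have "\<dots> = real p * frob p A"
    using v by (simp add: sum_distrib_left[symmetric])
  finally show ?thesis .
qed

lemma sum_sq_le_sq_sum:
  fixes a :: "'a \<Rightarrow> real"
  assumes "finite S" "\<forall>x\<in>S. a x \<ge> 0"
  shows "(\<Sum>x\<in>S. (a x)\<^sup>2) \<le> (\<Sum>x\<in>S. a x)\<^sup>2"
proof -
  have "(\<Sum>x\<in>S. (a x)\<^sup>2) \<le> (\<Sum>x\<in>S. a x * (\<Sum>y\<in>S. a y))"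
    unfolding power2_eq_square using assms
    by (intro sum_mono mult_left_mono member_le_sum) auto
  also have "\<dots> = (\<Sum>x\<in>S. a x)\<^sup>2" by (simp add: sum_distrib_right power2_eq_square)
  finally show ?thesis .
qed

lemma frob_le_sum:
  assumes "\<forall>i<p. \<forall>j<p. A i j \<ge> 0"
  shows "frob p A \<le> (\<Sum>i<p. \<Sum>j<p. A i j)"
proof -
  have "(\<Sum>i<p. \<Sum>j<p. (A i j)\<^sup>2) \<le> (\<Sum>i<p. (\<Sum>j<p. A i j)\<^sup>2)"
    using assms by (intro sum_mono sum_sq_le_sq_sum) auto
  also have "\<dots> \<le> (\<Sum>i<p. \<Sum>j<p. A i j)\<^sup>2"
    using assms by (intro sum_sq_le_sq_sum) (auto intro: sum_nonneg)
  finally have "frob p A \<le> sqrt ((\<Sum>i<p. \<Sum>j<p. A i j)\<^sup>2)"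
    unfolding frob_def by (rule real_sqrt_le_mono)
  also have "\<dots> = (\<Sum>i<p. \<Sum>j<p. A i j)"
  proof -
    have "0 \<le> (\<Sum>i<p. \<Sum>j<p. A i j)" using assms by (intro sum_nonneg) auto
    then show ?thesis by simp
  qed
  finally show ?thesis .
qed

context arch
begin

lemma Bmat_nonneg: "Bmat p b u i j \<ge> 0"
  unfolding Bmat_def by auto

lemma Mprod_nonneg: "Mprod p b es n i j \<ge> 0"
proof (induction n arbitrary: i j)
  case 0 then show ?case by (simp add: idmat_def)
next
  case (Suc n) then show ?case
    by (simp add: matmul_def sum_nonneg Bmat_nonneg)
qed

lemma Bmat_le: "j < p \<Longrightarrow> Bmat p b u i j \<le> beta u"
proof -
  assume j: "j < p"
  have "(b (Suc j))\<^sup>2 * u\<^sup>2 \<le> Ssum * u\<^sup>2" using le_Ssum[OF j] by (intro mult_right_mono) auto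
  then show ?thesis using beta_ge1[of u] unfolding Bmat_def beta_def by auto
qed

lemma Mprod_le: "Mprod p b es n i j \<le> (\<Prod>s\<in>{1..n}. real p * beta (es s))"
proof (induction n arbitrary: i j)
  case 0 then show ?case by (simp add: idmat_def)
next
  case (Suc n)
  let ?P = "\<Prod>s\<in>{1..n}. real p * beta (es s)"
  have "Mprod p b es (Suc n) i j = (\<Sum>l<p. Bmat p b (es (Suc n)) i l * Mprod p b es n l j)"
    by (simp add: matmul_def)
  also have "\<dots> \<le> (\<Sum>l<p. beta (es (Suc n)) * ?P)"
    using Suc.IH Bmat_le Bmat_nonneg Mprod_nonneg beta_ge1
    by (intro sum_mono mult_mono) (auto, meson order_trans)
  also have "\<dots> = real p * beta (es (Suc n)) * ?P" by simp
  also have "\<dots> = (\<Prod>s\<in>{1..Suc n}. real p * beta (es s))"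
    by (simp add: prod.nat_ivl_Suc' mult_ac)
  finally show ?case .
qed

lemma mv_B0: "mv p (Bmat p b u) w 0 = (\<Sum>j<p. (b (Suc j))\<^sup>2 * u\<^sup>2 * w j)"
  unfolding mv_def Bmat_def by simp

lemma mv_Bi: "0 < i \<Longrightarrow> i < p \<Longrightarrow> mv p (Bmat p b u) w i = w (i - 1)"
proof -
  assume i: "0 < i" "i < p"
  have "mv p (Bmat p b u) w i = (\<Sum>j<p. if j = i - 1 then w j else 0)"
    unfolding mv_def Bmat_def using i by (intro sum.cong) auto
  also have "\<dots> = w (i - 1)" using i by (simp add: sum.delta)
  finally show ?thesis .
qed

lemma mv_B0_lower:
  assumes "\<forall>j<p. w j \<ge> 0"
  shows "mv p (Bmat p b u) w 0 \<ge> gam u * (\<Sum>j<p. w j)"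
proof -
  have "gam u * (\<Sum>j<p. w j) \<le> cmin * u\<^sup>2 * (\<Sum>j<p. w j)"
    using assms by (intro mult_right_mono) (auto simp: gam_def intro!: sum_nonneg)
  also have "\<dots> = (\<Sum>j<p. cmin * u\<^sup>2 * w j)" by (simp add: sum_distrib_left)
  also have "\<dots> \<le> (\<Sum>j<p. (b (Suc j))\<^sup>2 * u\<^sup>2 * w j)"
    using assms cmin_le by (intro sum_mono mult_right_mono) auto
  finally show ?thesis unfolding mv_B0 .
qed

context
  fixes v :: "nat \<Rightarrow> real"
  assumes v: "\<forall>j<p. v j \<ge> 0" "(\<Sum>j<p. v j) = 1"
begin

lemma mv_M_nonneg: "mv p (Mprod p b es n) v i \<ge> 0"
  unfolding mv_def using v Mprod_nonneg by (intro sum_nonneg mult_nonneg_nonneg) auto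

lemma sig_lower: "(\<Sum>i<p. mv p (Mprod p b es n) v i) \<ge> (\<Prod>s\<in>{1..n}. gam (es s))"
proof (induction n)
  case 0
  have "(\<Sum>i<p. mv p idmat v i) = (\<Sum>i<p. v i)"
  proof (intro sum.cong refl)
    fix i assume "i \<in> {..<p}"
    have "mv p idmat v i = (\<Sum>j<p. if i = j then v j else 0)"
      unfolding mv_def idmat_def by (intro sum.cong) auto
    then show "mv p idmat v i = v i" using \<open>i \<in> {..<p}\<close> by (simp add: sum.delta)
  qed
  then show ?case using v by simp
next
  case (Suc n)
  let ?u = "mv p (Mprod p b es n) v"
  have "(\<Prod>s\<in>{1..Suc n}. gam (es s)) = gam (es (Suc n)) * (\<Prod>s\<in>{1..n}. gam (es s))"
    by (simp add: prod.nat_ivl_Suc')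
  also have "\<dots> \<le> gam (es (Suc n)) * (\<Sum>j<p. ?u j)"
    using Suc.IH gam_nonneg by (intro mult_left_mono) auto
  also have "\<dots> \<le> mv p (Bmat p b (es (Suc n))) ?u 0"
    using mv_M_nonneg by (intro mv_B0_lower) auto
  also have "\<dots> = mv p (Mprod p b es (Suc n)) v 0" by (simp add: mv_matmul)
  also have "\<dots> \<le> (\<Sum>i<p. mv p (Mprod p b es (Suc n)) v i)"
    using p1 by (intro member_le_sum mv_M_nonneg) auto
  finally show ?case .
qed

lemma comp_lower: "i < p \<Longrightarrow> i < n \<Longrightarrow> mv p (Mprod p b es n) v i \<ge> (\<Prod>s\<in>{1..n}. gam (es s))"
proof (induction n arbitrary: i)
  case 0 then show ?case by simp
next
  case (Suc n)
  let ?u = "mv p (Mprod p b es n) v"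
  have eq: "mv p (Mprod p b es (Suc n)) v i = mv p (Bmat p b (es (Suc n))) ?u i"
    by (simp add: mv_matmul)
  have P: "(\<Prod>s\<in>{1..Suc n}. gam (es s)) = gam (es (Suc n)) * (\<Prod>s\<in>{1..n}. gam (es s))"
    by (simp add: prod.nat_ivl_Suc')
  show ?case
  proof (cases "i = 0")
    case True
    have "gam (es (Suc n)) * (\<Prod>s\<in>{1..n}. gam (es s)) \<le> gam (es (Suc n)) * (\<Sum>j<p. ?u j)"
      using sig_lower[of es n] gam_nonneg by (intro mult_left_mono) auto
    also have "\<dots> \<le> mv p (Bmat p b (es (Suc n))) ?u 0"
      using mv_M_nonneg by (intro mv_B0_lower) auto
    finally have "gam (es (Suc n)) * (\<Prod>s\<in>{1..n}. gam (es s)) \<le> mv p (Bmat p b (es (Suc n))) ?u 0" .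
    moreover have eq0: "mv p (Mprod p b es (Suc n)) v 0 = mv p (Bmat p b (es (Suc n))) ?u 0"
      by (simp add: mv_matmul)
    ultimately show ?thesis unfolding P True by simp
  next
    case False
    then have "mv p (Mprod p b es (Suc n)) v i = ?u (i - 1)"
      using eq mv_Bi Suc.prems by simp
    moreover have "?u (i - 1) \<ge> (\<Prod>s\<in>{1..n}. gam (es s))"
      using Suc.IH[of "i - 1"] Suc.prems False by auto
    moreover have "gam (es (Suc n)) * (\<Prod>s\<in>{1..n}. gam (es s)) \<le> (\<Prod>s\<in>{1..n}. gam (es s))"
      using gam_le1 gam_nonneg by (intro mult_left_le_one_le prod_nonneg) auto
    ultimately show ?thesis unfolding P by linarith
  qed
qed

end

end

context arch
begin

definition UBp :: "(nat \<Rightarrow> real) \<Rightarrow> real" where "UBp es = (\<Prod>s\<in>{1..p}. real p * beta (es s))"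
definition kap :: "(nat \<Rightarrow> real) \<Rightarrow> real" where "kap es = (\<Prod>s\<in>{1..p}. gam (es s))"

lemma pbeta_pos: "real p * beta u > 0"
  using p1 beta_ge1[of u] by (intro mult_pos_pos) auto

lemma UBp_pos: "UBp es > 0" unfolding UBp_def using pbeta_pos by (intro prod_pos) auto

lemma kap_pos: "\<forall>s\<in>{1..p}. es s \<noteq> 0 \<Longrightarrow> kap es > 0"
  unfolding kap_def using gam_pos by (intro prod_pos) auto

lemma Dom:
  assumes v: "\<forall>j<p. v j \<ge> 0" "(\<Sum>j<p. v j) = 1"
    and es0: "\<forall>s\<in>{1..p}. es s \<noteq> 0" and n: "n \<ge> p"
  shows "\<forall>i<p. \<forall>j<p. Mprod p b es n i j \<le> (UBp es / kap es) * mv p (Mprod p b es n) v i"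
  using n
proof (induction n rule: nat_induct_at_least)
  case base
  show ?case
  proof (intro allI impI)
    fix i j assume ij: "i < p" "j < p"
    have "Mprod p b es p i j \<le> UBp es" unfolding UBp_def by (rule Mprod_le)
    also have "\<dots> = (UBp es / kap es) * kap es" using kap_pos[OF es0] by simp
    also have "\<dots> \<le> (UBp es / kap es) * mv p (Mprod p b es p) v i"
    proof (rule mult_left_mono)
      show "kap es \<le> mv p (Mprod p b es p) v i"
        unfolding kap_def using ij by (intro comp_lower[OF v]) auto
      show "0 \<le> UBp es / kap es" using UBp_pos[of es] kap_pos[OF es0] by simp
    qed
    finally show "Mprod p b es p i j \<le> (UBp es / kap es) * mv p (Mprod p b es p) v i" .
  qed
next
  case (Suc n)
  let ?R = "UBp es / kap es"
  show ?case
  proof (intro allI impI)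
    fix i j assume ij: "i < p" "j < p"
    have "Mprod p b es (Suc n) i j = (\<Sum>l<p. Bmat p b (es (Suc n)) i l * Mprod p b es n l j)"
      by (simp add: matmul_def)
    also have "\<dots> \<le> (\<Sum>l<p. Bmat p b (es (Suc n)) i l * (?R * mv p (Mprod p b es n) v l))"
      using Suc.IH ij Bmat_nonneg by (intro sum_mono mult_left_mono) auto
    also have "\<dots> = ?R * mv p (Bmat p b (es (Suc n))) (mv p (Mprod p b es n) v) i"
      unfolding mv_def[of p "Bmat p b (es (Suc n))"] by (simp add: sum_distrib_left mult_ac)
    also have "\<dots> = ?R * mv p (Mprod p b es (Suc n)) v i" by (simp add: mv_matmul)
    finally show "Mprod p b es (Suc n) i j \<le> ?R * mv p (Mprod p b es (Suc n)) v i" .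
  qed
qed

lemma LA3:
  assumes v: "\<forall>j<p. v j \<ge> 0" "(\<Sum>j<p. v j) = 1"
    and es: "\<forall>s\<in>{1..n}. es s \<noteq> 0" and n: "n \<ge> p"
  shows "ln (frob p (Mprod p b es n)) \<le> ln (\<Sum>i<p. mv p (Mprod p b es n) v i) + ln (real p) + (\<Sum>s\<in>{1..p}. Kp (es s))"
proof -
  let ?M = "Mprod p b es n"
  let ?sig = "\<Sum>i<p. mv p ?M v i"
  let ?R = "UBp es / kap es"
  have es0: "\<forall>s\<in>{1..p}. es s \<noteq> 0" using es n by auto
  have "?sig \<ge> (\<Prod>s\<in>{1..n}. gam (es s))" by (rule sig_lower[OF v])
  moreover have "(\<Prod>s\<in>{1..n}. gam (es s)) > 0" using es gam_pos by (intro prod_pos) auto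
  ultimately have sig: "?sig > 0" by linarith
  have "?sig \<le> real p * frob p ?M" by (rule LA2[OF v])
  then have fpos: "frob p ?M > 0" using sig p1
    by (metis less_le_trans mult_eq_0_iff not_less_iff_gr_or_eq of_nat_0_le_iff zero_less_mult_iff)
  have R: "?R > 0" using UBp_pos kap_pos[OF es0] by simp
  have "frob p ?M \<le> (\<Sum>i<p. \<Sum>j<p. ?M i j)"
    using Mprod_nonneg by (intro frob_le_sum) auto
  also have "\<dots> \<le> (\<Sum>i<p. \<Sum>j<p. ?R * mv p ?M v i)"
    using Dom[OF v es0 n] by (intro sum_mono) auto
  also have "\<dots> = (\<Sum>i<p. (real p * ?R) * mv p ?M v i)" by (simp add: mult.assoc)
  also have "\<dots> = real p * ?R * ?sig" by (rule sum_distrib_left[symmetric])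
  finally have le: "frob p ?M \<le> real p * ?R * ?sig" .
  have "ln (frob p ?M) \<le> ln (real p * ?R * ?sig)"
    using le fpos by simp
  also have "\<dots> = ln (real p * ?R) + ln ?sig"
  proof (rule ln_mult_pos)
    show "0 < real p * ?R" using p1 R by (intro mult_pos_pos) auto
  qed (rule sig)
  also have "ln (real p * ?R) = ln (real p) + ln ?R"
    using p1 R by (intro ln_mult_pos) auto
  also have "ln ?R = ln (UBp es) - ln (kap es)"
    using UBp_pos[of es] kap_pos[OF es0] by (intro ln_divide_pos) auto
  also have "ln (UBp es) = (\<Sum>s\<in>{1..p}. ln (real p * beta (es s)))"
    unfolding UBp_def using pbeta_pos by (intro ln_prod) (simp, metis less_irrefl)
  also have "ln (kap es) = (\<Sum>s\<in>{1..p}. ln (gam (es s)))"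
    unfolding kap_def using gam_pos es0 by (intro ln_prod) (simp, metis atLeastAtMost_iff less_irrefl)
  finally show ?thesis by (simp add: Kp_def sum_subtractf)
qed

end

lemma comp_state: "(\<lambda>x. x j) \<in> borel_measurable (state_space p)"
proof (cases "j < p")
  case True
  then show ?thesis unfolding state_space_def
    using measurable_component_singleton[of j "{..<p}" "\<lambda>_. lborel"] by simp
next
  case False
  have "(\<lambda>x. undefined) \<in> borel_measurable (state_space p)" by simp
  then show ?thesis
    by (rule measurable_cong[THEN iffD1, rotated])
       (use False in \<open>auto simp: state_space_def space_PiM PiE_def extensional_def\<close>)
qed

lemma sets_state_pair: "sets (state_space p \<Otimes>\<^sub>M N) = sets (state_space p \<Otimes>\<^sub>M N)" ..

lemma shiftvec_eq: "shiftvec p b x u i = (if i < p then (if i = 0 then bstar p b x * u else x (i - 1)) else undefined)"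
  by (simp add: shiftvec_def zfun_def)

lemma shiftvec_meas[measurable]:
  "(\<lambda>\<omega>. shiftvec p b (fst \<omega>) (snd \<omega>) i) \<in> borel_measurable (state_space p \<Otimes>\<^sub>M borel)"
proof -
  note comp_state[measurable]
  show ?thesis unfolding shiftvec_eq bstar_def by measurable
qed

lemma wfun_meas[measurable]:
  "(\<lambda>\<omega>. wfun p b (fst \<omega>) (snd \<omega>)) \<in> borel_measurable (state_space p \<Otimes>\<^sub>M borel)"
  unfolding wfun_def vnorm_def by measurable

lemma step_meas[measurable]:
  "(\<lambda>\<omega>. chain_step p b (fst \<omega>) (snd \<omega>)) \<in> measurable (state_space p \<Otimes>\<^sub>M borel) (state_space p)"
  unfolding chain_step_def state_space_def[of p]
  by (intro measurable_restrict) (simp add: state_space_def[symmetric])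

locale arch_prob = arch +
  fixes f :: "real \<Rightarrow> real" and Stat :: "(nat \<Rightarrow> real) measure" and Cf r0 :: real
  assumes f_meas[measurable]: "f \<in> borel_measurable lborel"
    and f_nonneg: "\<And>u. f u \<ge> 0"
    and f_dens: "(\<integral>\<^sup>+ u. ennreal (f u) \<partial>lborel) = 1"
    and f_bdd: "\<And>u. f u \<le> Cf"
    and r0: "r0 > 0"
    and mom: "(\<integral>\<^sup>+ u. ennreal (\<bar>u\<bar> powr r0 * f u) \<partial>lborel) < \<infinity>"
    and stat: "stationary_dist p b f Stat"
begin

definition F :: "real measure" where "F = density lborel (\<lambda>u. ennreal (f u))"
definition PF :: "nat \<Rightarrow> (nat \<Rightarrow> real) measure" where "PF T = PiM {1..T} (\<lambda>_. F)"

lemma sets_F[measurable_cong]: "sets F = sets borel" unfolding F_def by simp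
lemma space_F: "space F = UNIV" unfolding F_def by simp

lemma F_prob: "prob_space F"
proof
  show "emeasure F (space F) = 1"
    unfolding F_def using f_dens by (simp add: emeasure_density)
qed

sublocale FF: prob_space F by (rule F_prob)

sublocale PS: product_prob_space "\<lambda>_::nat. F" "UNIV"
  by unfold_locales

lemma PF_prob: "prob_space (PF T)"
  unfolding PF_def by (intro prob_space_PiM F_prob)

lemma Stat_prob: "prob_space Stat" using stat unfolding stationary_dist_def by simp
sublocale SS: prob_space Stat by (rule Stat_prob)

lemma sets_Stat[measurable_cong]: "sets Stat = sets (state_space p)"
  using stat unfolding stationary_dist_def by simp

lemma comp_PF: "(\<lambda>es. es k) \<in> borel_measurable (PF T)"
proof (cases "k \<in> {1..T}")
  case True
  have "(\<lambda>es. es k) \<in> measurable (PF T) F"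
    unfolding PF_def using measurable_component_singleton[OF True, of "\<lambda>_. F"] by simp
  moreover have "measurable (PF T) F = measurable (PF T) borel"
    by (rule measurable_cong_sets[OF refl sets_F])
  ultimately show ?thesis by simp
next
  case False
  have "(\<lambda>x. undefined) \<in> borel_measurable (PF T)" by simp
  then show ?thesis
    by (rule measurable_cong[THEN iffD1, rotated])
       (use False in \<open>auto simp: PF_def space_PiM PiE_def extensional_def\<close>)
qed

lemma th_meas[measurable]:
  "(\<lambda>\<omega>. th p b (snd \<omega>) (fst \<omega>) n) \<in> measurable (PF T \<Otimes>\<^sub>M state_space p) (state_space p)"
proof (induction n)
  case 0 then show ?case by simp
next
  case (Suc n)
  have "(\<lambda>\<omega>. (th p b (snd \<omega>) (fst \<omega>) n, fst \<omega> (Suc n))) \<in> measurable (PF T \<Otimes>\<^sub>M state_space p) (state_space p \<Otimes>\<^sub>M borel)"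
    using Suc.IH comp_PF by measurable
  from measurable_compose[OF this step_meas] show ?case by simp
qed

lemma Theta_sets[measurable]: "Theta p \<in> sets (state_space p)"
proof -
  have "Theta p = {x \<in> space (state_space p). vnorm p x = 1}" unfolding Theta_def ..
  also have "\<dots> \<in> sets (state_space p)"
  proof -
    note comp_state[measurable]
    show ?thesis unfolding vnorm_def by measurable
  qed
  finally show ?thesis .
qed

lemma AE_Theta: "AE x in Stat. x \<in> Theta p"
proof -
  have "emeasure Stat (Theta p) = 1" using stat unfolding stationary_dist_def by simp
  then show ?thesis
    using Theta_sets sets_Stat by (intro SS.AE_prob_1) (simp add: SS.emeasure_eq_measure)
qed

end


lemma th_upd: "k > n \<Longrightarrow> th p b x (es(k := y)) n = th p b x es n"
  by (induction n) auto

context arch_prob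
begin

lemma th_meas1[measurable]:
  assumes "x \<in> space (state_space p)"
  shows "(\<lambda>es. th p b x es n) \<in> measurable (PF T) (state_space p)"
proof -
  have "(\<lambda>es. (es, x)) \<in> measurable (PF T) (PF T \<Otimes>\<^sub>M state_space p)"
    using assms by (rule measurable_Pair2')
  from measurable_compose[OF this th_meas] show ?thesis by simp
qed

lemma step_meas_F[measurable]:
  "(\<lambda>\<omega>. chain_step p b (fst \<omega>) (snd \<omega>)) \<in> measurable (state_space p \<Otimes>\<^sub>M F) (state_space p)"
proof -
  have "sets (state_space p \<Otimes>\<^sub>M F) = sets (state_space p \<Otimes>\<^sub>M borel)"
    by (rule sets_pair_measure_cong[OF refl sets_F])
  then have "measurable (state_space p \<Otimes>\<^sub>M F) (state_space p) = measurable (state_space p \<Otimes>\<^sub>M borel) (state_space p)"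
    by (rule measurable_cong_sets[OF _ refl])
  then show ?thesis using step_meas by simp
qed

lemma step_meas2:
  assumes "x \<in> space (state_space p)"
  shows "(\<lambda>u. chain_step p b x u) \<in> measurable borel (state_space p)"
  using measurable_Pair2[OF step_meas assms] by simp

lemma STAT:
  assumes H[measurable]: "H \<in> borel_measurable (state_space p)"
  shows "(\<integral>\<^sup>+x. H x \<partial>Stat) = (\<integral>\<^sup>+x. \<integral>\<^sup>+u. H (chain_step p b x u) \<partial>F \<partial>Stat)"
proof -
  interpret P: pair_sigma_finite Stat F by unfold_locales
  have sS: "sets (Stat \<Otimes>\<^sub>M F) = sets (state_space p \<Otimes>\<^sub>M F)"
    by (rule sets_pair_measure_cong[OF sets_Stat refl])
  have meas: "(\<lambda>\<omega>. chain_step p b (fst \<omega>) (snd \<omega>)) \<in> measurable (Stat \<Otimes>\<^sub>M F) (state_space p)"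
    using step_meas_F measurable_cong_sets[OF sS refl, of "state_space p"] by simp
  let ?D = "distr (Stat \<Otimes>\<^sub>M F) (state_space p) (\<lambda>\<omega>. chain_step p b (fst \<omega>) (snd \<omega>))"
  have D: "?D = Stat"
  proof (rule measure_eqI)
    show "sets ?D = sets Stat" using sets_Stat by simp
    fix A assume A: "A \<in> sets ?D"
    then have A': "A \<in> sets (state_space p)" by simp
    have "emeasure ?D A = (\<integral>\<^sup>+\<omega>. indicator A \<omega> \<partial>?D)"
      using A by simp
    also have "\<dots> = (\<integral>\<^sup>+\<omega>. indicator A (chain_step p b (fst \<omega>) (snd \<omega>)) \<partial>(Stat \<Otimes>\<^sub>M F))"
      using A' meas by (intro nn_integral_distr) auto
    also have "\<dots> = (\<integral>\<^sup>+x. \<integral>\<^sup>+u. indicator A (chain_step p b x u) \<partial>F \<partial>Stat)"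
    proof (rule FF.nn_integral_fst[symmetric, where f="\<lambda>\<omega>. indicator A (chain_step p b (fst \<omega>) (snd \<omega>)) :: ennreal", simplified])
      show "(\<lambda>\<omega>. indicator A (chain_step p b (fst \<omega>) (snd \<omega>)) :: ennreal) \<in> borel_measurable (Stat \<Otimes>\<^sub>M F)"
        using A' meas by measurable
    qed
    also have "\<dots> = (\<integral>\<^sup>+x. \<integral>\<^sup>+u. ennreal (f u) * indicator A (chain_step p b x u) \<partial>lborel \<partial>Stat)"
    proof (intro nn_integral_cong)
      fix x assume x: "x \<in> space Stat"
      then have x': "x \<in> space (state_space p)" using sets_eq_imp_space_eq[OF sets_Stat] by simp
      have "(\<lambda>u. indicator A (chain_step p b x u) :: ennreal) \<in> borel_measurable lborel"
        using measurable_compose[OF step_meas2[OF x'] borel_measurable_indicator[OF A']] by simp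
      then show "(\<integral>\<^sup>+u. indicator A (chain_step p b x u) \<partial>F) = (\<integral>\<^sup>+u. ennreal (f u) * indicator A (chain_step p b x u) \<partial>lborel)"
        unfolding F_def by (intro nn_integral_density) auto
    qed
    also have "\<dots> = emeasure Stat A"
      using stat A' unfolding stationary_dist_def by simp
    finally show "emeasure ?D A = emeasure Stat A" .
  qed
  have "(\<integral>\<^sup>+x. H x \<partial>Stat) = (\<integral>\<^sup>+x. H x \<partial>?D)" using D by simp
  also have "\<dots> = (\<integral>\<^sup>+\<omega>. H (chain_step p b (fst \<omega>) (snd \<omega>)) \<partial>(Stat \<Otimes>\<^sub>M F))"
    using meas by (intro nn_integral_distr) auto
  also have "\<dots> = (\<integral>\<^sup>+x. \<integral>\<^sup>+u. H (chain_step p b x u) \<partial>F \<partial>Stat)"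
  proof (rule FF.nn_integral_fst[symmetric, where f="\<lambda>\<omega>. H (chain_step p b (fst \<omega>) (snd \<omega>))", simplified])
    show "(\<lambda>\<omega>. H (chain_step p b (fst \<omega>) (snd \<omega>))) \<in> borel_measurable (Stat \<Otimes>\<^sub>M F)"
      using meas by measurable
  qed
  finally show ?thesis .
qed

lemma space_Stat: "space Stat = space (state_space p)"
  using sets_eq_imp_space_eq[OF sets_Stat] .

lemma PF_Suc: "PF (Suc n) = PiM (insert (Suc n) {1..n}) (\<lambda>_. F)"
  unfolding PF_def by (simp add: atLeastAtMostSuc_conv)

lemma PF_space1: "emeasure (PF n) (space (PF n)) = 1"
  using prob_space.emeasure_space_1[OF PF_prob] .

lemma ins_step:
  assumes h[measurable]: "h \<in> borel_measurable (PF (Suc n))"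
  shows "(\<integral>\<^sup>+es. h es \<partial>PF (Suc n)) = (\<integral>\<^sup>+es. \<integral>\<^sup>+y. h (es(Suc n := y)) \<partial>F \<partial>PF n)"
proof -
  have "h \<in> borel_measurable (PiM (insert (Suc n) {1..n}) (\<lambda>_. F))" using h by (simp add: PF_Suc)
  then show ?thesis unfolding PF_Suc
    by (subst PS.product_nn_integral_insert) (auto simp: PF_def)
qed

lemma H'_meas:
  assumes H[measurable]: "H \<in> borel_measurable (state_space p)"
  shows "(\<lambda>z. \<integral>\<^sup>+y. H (chain_step p b z y) \<partial>F) \<in> borel_measurable (state_space p)"
proof -
  have "(\<lambda>\<omega>. H (chain_step p b (fst \<omega>) (snd \<omega>))) \<in> borel_measurable (state_space p \<Otimes>\<^sub>M F)"
    using measurable_compose[OF step_meas_F H] by (simp add: comp_def)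
  then show ?thesis using FF.borel_measurable_nn_integral_fst by simp
qed

lemma INV:
  assumes "H \<in> borel_measurable (state_space p)"
  shows "(\<integral>\<^sup>+x. \<integral>\<^sup>+es. H (th p b x es n) \<partial>PF n \<partial>Stat) = (\<integral>\<^sup>+x. H x \<partial>Stat)"
  using assms
proof (induction n arbitrary: H)
  case 0
  then show ?case using PF_space1[of 0] by simp
next
  case (Suc n)
  note H[measurable] = Suc.prems
  define H' where "H' = (\<lambda>z. \<integral>\<^sup>+y. H (chain_step p b z y) \<partial>F)"
  have H'm: "H' \<in> borel_measurable (state_space p)" unfolding H'_def by (rule H'_meas[OF H])
  have "(\<integral>\<^sup>+x. \<integral>\<^sup>+es. H (th p b x es (Suc n)) \<partial>PF (Suc n) \<partial>Stat) = (\<integral>\<^sup>+x. \<integral>\<^sup>+es. H' (th p b x es n) \<partial>PF n \<partial>Stat)"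
  proof (intro nn_integral_cong)
    fix x assume "x \<in> space Stat"
    then have x: "x \<in> space (state_space p)" by (simp add: space_Stat)
    have m: "(\<lambda>es. H (th p b x es (Suc n))) \<in> borel_measurable (PF (Suc n))"
      by (rule measurable_compose[OF th_meas1[OF x] H])
    show "(\<integral>\<^sup>+es. H (th p b x es (Suc n)) \<partial>PF (Suc n)) = (\<integral>\<^sup>+es. H' (th p b x es n) \<partial>PF n)"
      unfolding ins_step[OF m] H'_def by (simp add: th_upd)
  qed
  also have "\<dots> = (\<integral>\<^sup>+x. H' x \<partial>Stat)" by (rule Suc.IH[OF H'm])
  also have "\<dots> = (\<integral>\<^sup>+x. H x \<partial>Stat)" unfolding H'_def by (rule STAT[OF H, symmetric])
  finally show ?case .
qed

lemma MARG:
  assumes hm: "\<And>T. h \<in> borel_measurable (PF T)"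
    and dep: "\<And>es es'. (\<forall>i\<in>{1..m}. es i = es' i) \<Longrightarrow> h es = h es'"
    and T: "T \<ge> m"
  shows "(\<integral>\<^sup>+es. h es \<partial>PF T) = (\<integral>\<^sup>+es. h es \<partial>PF m)"
  using T
proof (induction T rule: nat_induct_at_least)
  case base then show ?case by simp
next
  case (Suc T)
  have "(\<integral>\<^sup>+es. h es \<partial>PF (Suc T)) = (\<integral>\<^sup>+es. \<integral>\<^sup>+y. h (es(Suc T := y)) \<partial>F \<partial>PF T)"
    by (rule ins_step[OF hm])
  also have "\<dots> = (\<integral>\<^sup>+es. \<integral>\<^sup>+y. h es \<partial>F \<partial>PF T)"
    using Suc.hyps by (intro nn_integral_cong) (subst dep[of _ "es" for es], auto)
  also have "\<dots> = (\<integral>\<^sup>+es. h es \<partial>PF T)" by (simp add: FF.emeasure_space_1)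
  finally show ?case using Suc.IH by simp
qed

lemma KEY:
  assumes G[measurable]: "G \<in> borel_measurable (state_space p \<Otimes>\<^sub>M borel)" and s: "s < T"
  shows "(\<integral>\<^sup>+x. \<integral>\<^sup>+es. G (th p b x es s, es (Suc s)) \<partial>PF T \<partial>Stat) = (\<integral>\<^sup>+x. \<integral>\<^sup>+u. G (x, u) \<partial>F \<partial>Stat)"
proof -
  have sG: "sets (state_space p \<Otimes>\<^sub>M F) = sets (state_space p \<Otimes>\<^sub>M borel)"
    by (rule sets_pair_measure_cong[OF refl sets_F])
  have GF: "G \<in> borel_measurable (state_space p \<Otimes>\<^sub>M F)"
    using G measurable_cong_sets[OF sG refl, of borel] by simp
  define H where "H = (\<lambda>z. \<integral>\<^sup>+u. G (z, u) \<partial>F)"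
  have Hm: "H \<in> borel_measurable (state_space p)" unfolding H_def
    using FF.borel_measurable_nn_integral_fst[OF GF] by simp
  have "(\<integral>\<^sup>+x. \<integral>\<^sup>+es. G (th p b x es s, es (Suc s)) \<partial>PF T \<partial>Stat) = (\<integral>\<^sup>+x. \<integral>\<^sup>+es. H (th p b x es s) \<partial>PF s \<partial>Stat)"
  proof (intro nn_integral_cong)
    fix x assume "x \<in> space Stat"
    then have x: "x \<in> space (state_space p)" by (simp add: space_Stat)
    have m: "\<And>T'. (\<lambda>es. G (th p b x es s, es (Suc s))) \<in> borel_measurable (PF T')"
    proof -
      fix T'
      have "(\<lambda>es. (th p b x es s, es (Suc s))) \<in> measurable (PF T') (state_space p \<Otimes>\<^sub>M borel)"
        using th_meas1[OF x] comp_PF by measurable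
      from measurable_compose[OF this G] show "(\<lambda>es. G (th p b x es s, es (Suc s))) \<in> borel_measurable (PF T')"
        by (simp add: comp_def)
    qed
    have dep: "(\<forall>i\<in>{1..Suc s}. es i = es' i) \<Longrightarrow> G (th p b x es s, es (Suc s)) = G (th p b x es' s, es' (Suc s))" for es es'
    proof -
      assume a: "\<forall>i\<in>{1..Suc s}. es i = es' i"
      have "\<forall>i\<le>s. th p b x es i = th p b x es' i"
      proof (intro allI impI)
        fix i show "i \<le> s \<Longrightarrow> th p b x es i = th p b x es' i"
          using a by (induction i) auto
      qed
      then show ?thesis using a by auto
    qed
    have "(\<integral>\<^sup>+es. G (th p b x es s, es (Suc s)) \<partial>PF T) = (\<integral>\<^sup>+es. G (th p b x es s, es (Suc s)) \<partial>PF (Suc s))"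
      using s by (intro MARG[OF m dep]) auto
    also have "\<dots> = (\<integral>\<^sup>+es. \<integral>\<^sup>+y. G (th p b x (es(Suc s := y)) s, y) \<partial>F \<partial>PF s)"
      by (subst ins_step[OF m]) simp
    also have "\<dots> = (\<integral>\<^sup>+es. H (th p b x es s) \<partial>PF s)"
      unfolding H_def by (simp add: th_upd)
    finally show "(\<integral>\<^sup>+es. G (th p b x es s, es (Suc s)) \<partial>PF T) = (\<integral>\<^sup>+es. H (th p b x es s) \<partial>PF s)" .
  qed
  also have "\<dots> = (\<integral>\<^sup>+x. H x \<partial>Stat)" by (rule INV[OF Hm])
  finally show ?thesis unfolding H_def .
qed

end

definition Dl :: "real \<Rightarrow> real" where "Dl u = \<bar>ln \<bar>u\<bar>\<bar> + ln (1 + \<bar>u\<bar>)"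

lemma ln_le_powr: "(x::real) > 0 \<Longrightarrow> r > 0 \<Longrightarrow> ln x \<le> x powr r / r"
proof -
  assume x: "x > 0" and r: "r > 0"
  have "r * ln x = ln (x powr r)" using x by (simp add: ln_powr)
  also have "\<dots> \<le> x powr r - 1" using x by (intro ln_le_minus_one) simp
  also have "\<dots> \<le> x powr r" by simp
  finally show ?thesis using r by (simp add: field_simps)
qed

lemma Dl_nonneg: "Dl u \<ge> 0" unfolding Dl_def by simp

lemma Dl_bound:
  assumes u: "u \<noteq> 0" and r: "r > 0"
  shows "Dl u \<le> 1 + (2 / r) * \<bar>u\<bar> powr r + 2 * (indicator {-1..1} u * \<bar>u\<bar> powr (-1/2))"
proof -
  have au: "\<bar>u\<bar> > 0" using u by simp
  have l1: "ln (1 + \<bar>u\<bar>) \<le> 1 + \<bar>u\<bar> powr r / r"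
  proof (cases "\<bar>u\<bar> \<le> 1")
    case True
    have "ln (1 + \<bar>u\<bar>) \<le> ln 2" using True by simp
    also have "\<dots> \<le> 1" using ln_2_less_1 by simp
    finally show ?thesis using r by (simp add: add_increasing2)
  next
    case False
    have "ln (1 + \<bar>u\<bar>) \<le> ln (2 * \<bar>u\<bar>)" using False by simp
    also have "\<dots> = ln 2 + ln \<bar>u\<bar>" using au by (simp add: ln_mult)
    also have "\<dots> \<le> 1 + \<bar>u\<bar> powr r / r" using ln_2_less_1 ln_le_powr[OF au r] by simp
    finally show ?thesis .
  qed
  show ?thesis
  proof (cases "\<bar>u\<bar> \<le> 1")
    case True
    have "\<bar>ln \<bar>u\<bar>\<bar> = - ln \<bar>u\<bar>" using True au by simp
    also have "\<dots> = 2 * ln (\<bar>u\<bar> powr (-1/2))" using au by simp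
    also have "\<dots> \<le> 2 * (\<bar>u\<bar> powr (-1/2))"
    proof -
      have "ln (\<bar>u\<bar> powr (-1/2)) \<le> \<bar>u\<bar> powr (-1/2)" using au by (intro ln_bound) simp
      then show ?thesis by simp
    qed
    finally have lu: "\<bar>ln \<bar>u\<bar>\<bar> \<le> 2 * (\<bar>u\<bar> powr (-1/2))" .
    have "indicator {-1..1} u = (1::real)" using True by (simp add: indicator_def abs_le_iff)
    then have "\<bar>ln \<bar>u\<bar>\<bar> \<le> 2 * (indicator {-1..1} u * \<bar>u\<bar> powr (-1/2))" using lu by simp
    moreover have "\<bar>u\<bar> powr r / r \<le> (2 / r) * \<bar>u\<bar> powr r"
      using r by (simp add: divide_right_mono)
    ultimately show ?thesis using l1 unfolding Dl_def by linarith
  next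
    case False
    have "\<bar>ln \<bar>u\<bar>\<bar> = ln \<bar>u\<bar>" using False by simp
    also have "\<dots> \<le> \<bar>u\<bar> powr r / r" by (rule ln_le_powr[OF au r])
    finally have "\<bar>ln \<bar>u\<bar>\<bar> \<le> \<bar>u\<bar> powr r / r" .
    moreover have "indicator {-1..1} u * \<bar>u\<bar> powr (-1/2) \<ge> 0" by simp
    moreover have "(2 / r) * \<bar>u\<bar> powr r = \<bar>u\<bar> powr r / r + \<bar>u\<bar> powr r / r" by simp
    ultimately show ?thesis using l1 unfolding Dl_def by linarith
  qed
qed

lemma ennreal_split3:
  assumes "A \<ge> 0" "B \<ge> 0" "C \<ge> 0"
  shows "ennreal (1 + B * A + 2 * C) = 1 + ennreal B * ennreal A + 2 * ennreal C"
proof -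
  have "ennreal (1 + B * A + 2 * C) = ennreal (1 + B * A) + ennreal (2 * C)"
    using assms by (intro ennreal_plus) auto
  also have "ennreal (1 + B * A) = ennreal 1 + ennreal (B * A)"
    using assms by (intro ennreal_plus) auto
  also have "ennreal (B * A) = ennreal B * ennreal A" using assms by (intro ennreal_mult) auto
  also have "ennreal (2 * C) = ennreal 2 * ennreal C" using assms by (intro ennreal_mult) auto
  finally show ?thesis by simp
qed

lemma int_sing: "(\<integral>\<^sup>+u. ennreal (indicator {-1..1} u * \<bar>u\<bar> powr (-1/2)) \<partial>lborel) < \<infinity>"
proof -
  let ?g = "\<lambda>u::real. ennreal (indicator {0..1} u * \<bar>u\<bar> powr (-1/2))"
  have gm: "?g \<in> borel_measurable borel" by measurable
  have "(\<integral>\<^sup>+u. ?g u \<partial>lborel) = (\<integral>\<^sup>+u. ennreal (indicator {0..1} u * u powr (-1/2)) \<partial>lborel)"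
    by (intro nn_integral_cong) (auto simp: indicator_def)
  also have "\<dots> = ennreal (1 powr ((-1/2) + 1) / ((-1/2) + 1))"
    by (intro nn_integral_has_integral_lebesgue has_integral_powr_from_0) auto
  finally have g: "(\<integral>\<^sup>+u. ?g u \<partial>lborel) < \<infinity>" by simp
  have "(\<integral>\<^sup>+u. ?g (-u) \<partial>lborel) = (\<integral>\<^sup>+u. ?g u \<partial>lborel)"
    using nn_integral_real_affine[OF gm, of "-1" 0] by simp
  then have g': "(\<integral>\<^sup>+u. ?g (-u) \<partial>lborel) < \<infinity>" using g by simp
  have "(\<integral>\<^sup>+u. ennreal (indicator {-1..1} u * \<bar>u\<bar> powr (-1/2)) \<partial>lborel) \<le> (\<integral>\<^sup>+u. ?g u + ?g (-u) \<partial>lborel)"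
    by (intro nn_integral_mono) (auto simp: indicator_def ennreal_plus[symmetric] simp del: ennreal_plus)
  also have "\<dots> = (\<integral>\<^sup>+u. ?g u \<partial>lborel) + (\<integral>\<^sup>+u. ?g (-u) \<partial>lborel)"
    by (intro nn_integral_add) auto
  also have "\<dots> < \<infinity>" using g g' by simp
  finally show ?thesis .
qed

context arch_prob
begin

lemma nnF: "g \<in> borel_measurable borel \<Longrightarrow> (\<integral>\<^sup>+u. g u \<partial>F) = (\<integral>\<^sup>+u. ennreal (f u) * g u \<partial>lborel)"
  unfolding F_def by (intro nn_integral_density) auto

lemma AE_F_nz: "AE u in F. u \<noteq> 0"
  unfolding F_def by (subst AE_density) (auto intro: AE_mp[OF AE_lborel_singleton])

lemma int_Dl: "(\<integral>\<^sup>+u. ennreal (Dl u) \<partial>F) < \<infinity>"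
proof -
  let ?h = "\<lambda>u. indicator {-1..1} u * \<bar>u\<bar> powr (-1/2)"
  have "(\<integral>\<^sup>+u. ennreal (Dl u) \<partial>F) \<le> (\<integral>\<^sup>+u. 1 + ennreal (2 / r0) * ennreal (\<bar>u\<bar> powr r0) + 2 * ennreal (?h u) \<partial>F)"
  proof (intro nn_integral_mono_AE, rule AE_mp[OF AE_F_nz], intro AE_I2 impI)
    fix u :: real assume u: "u \<noteq> 0"
    have "ennreal (Dl u) \<le> ennreal (1 + (2 / r0) * \<bar>u\<bar> powr r0 + 2 * ?h u)"
      using Dl_bound[OF u r0] by (intro ennreal_leI)
    also have "\<dots> = 1 + ennreal (2 / r0) * ennreal (\<bar>u\<bar> powr r0) + 2 * ennreal (?h u)"
      using r0 by (intro ennreal_split3) auto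
    finally show "ennreal (Dl u) \<le> 1 + ennreal (2 / r0) * ennreal (\<bar>u\<bar> powr r0) + 2 * ennreal (?h u)" .
  qed
  also have "\<dots> = 1 + ennreal (2 / r0) * (\<integral>\<^sup>+u. ennreal (\<bar>u\<bar> powr r0) \<partial>F) + 2 * (\<integral>\<^sup>+u. ennreal (?h u) \<partial>F)"
  proof -
    have m1: "(\<lambda>u. ennreal (\<bar>u\<bar> powr r0)) \<in> borel_measurable F" by measurable
    have m2: "(\<lambda>u. ennreal (?h u)) \<in> borel_measurable F" by measurable
    have "(\<integral>\<^sup>+u. 1 + ennreal (2 / r0) * ennreal (\<bar>u\<bar> powr r0) + 2 * ennreal (?h u) \<partial>F)
      = (\<integral>\<^sup>+u. 1 + ennreal (2 / r0) * ennreal (\<bar>u\<bar> powr r0) \<partial>F) + (\<integral>\<^sup>+u. 2 * ennreal (?h u) \<partial>F)"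
      using m1 m2 by (intro nn_integral_add) auto
    also have "(\<integral>\<^sup>+u. 1 + ennreal (2 / r0) * ennreal (\<bar>u\<bar> powr r0) \<partial>F)
      = (\<integral>\<^sup>+u. 1 \<partial>F) + (\<integral>\<^sup>+u. ennreal (2 / r0) * ennreal (\<bar>u\<bar> powr r0) \<partial>F)"
      using m1 by (intro nn_integral_add) auto
    also have "(\<integral>\<^sup>+u. ennreal (2 / r0) * ennreal (\<bar>u\<bar> powr r0) \<partial>F) = ennreal (2 / r0) * (\<integral>\<^sup>+u. ennreal (\<bar>u\<bar> powr r0) \<partial>F)"
      using m1 by (intro nn_integral_cmult) auto
    also have "(\<integral>\<^sup>+u. 2 * ennreal (?h u) \<partial>F) = 2 * (\<integral>\<^sup>+u. ennreal (?h u) \<partial>F)"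
      using m2 by (intro nn_integral_cmult) auto
    finally show ?thesis by (simp add: FF.emeasure_space_1)
  qed
  also have "\<dots> < \<infinity>"
  proof -
    have "(\<integral>\<^sup>+u. ennreal (\<bar>u\<bar> powr r0) \<partial>F) = (\<integral>\<^sup>+u. ennreal (\<bar>u\<bar> powr r0 * f u) \<partial>lborel)"
      by (subst nnF) (auto simp: ennreal_mult[symmetric] f_nonneg mult.commute)
    then have m: "(\<integral>\<^sup>+u. ennreal (\<bar>u\<bar> powr r0) \<partial>F) < \<infinity>" using mom by simp
    have "(\<integral>\<^sup>+u. ennreal (?h u) \<partial>F) = (\<integral>\<^sup>+u. ennreal (f u) * ennreal (?h u) \<partial>lborel)"
      by (rule nnF) measurable
    also have "\<dots> \<le> (\<integral>\<^sup>+u. ennreal Cf * ennreal (?h u) \<partial>lborel)"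
      using f_bdd by (intro nn_integral_mono mult_right_mono ennreal_leI) auto
    also have "\<dots> = ennreal Cf * (\<integral>\<^sup>+u. ennreal (?h u) \<partial>lborel)"
      by (intro nn_integral_cmult) measurable
    also have "\<dots> < \<infinity>" using int_sing by (simp add: ennreal_mult_less_top)
    finally have h: "(\<integral>\<^sup>+u. ennreal (?h u) \<partial>F) < \<infinity>" .
    show ?thesis using m h by (simp add: ennreal_mult_less_top)
  qed
  finally show ?thesis .
qed

end

context arch_prob
begin

definition Cw :: real where "Cw = \<bar>ln cmin\<bar> + ln (1 + Ssum)"
definition Ck :: real where "Ck = ln (real p) + ln (1 + Ssum) + \<bar>ln cmin\<bar>"

lemma ln_sq: "(u::real) \<noteq> 0 \<Longrightarrow> ln (u\<^sup>2) = 2 * ln \<bar>u\<bar>"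
proof -
  assume u: "u \<noteq> 0"
  have a: "\<bar>u\<bar> > 0" using u by simp
  have "u\<^sup>2 = \<bar>u\<bar> * \<bar>u\<bar>" by (simp add: power2_eq_square)
  then have "ln (u\<^sup>2) = ln (\<bar>u\<bar> * \<bar>u\<bar>)" by simp
  also have "\<dots> = ln \<bar>u\<bar> + ln \<bar>u\<bar>" by (rule ln_mult_pos[OF a a])
  finally show ?thesis by simp
qed

lemma ln_sq_bound: "ln (1 + Ssum * u\<^sup>2) \<le> ln (1 + Ssum) + 2 * ln (1 + \<bar>u\<bar>)"
proof -
  have S: "Ssum \<ge> 0" by (rule Ssum_nonneg)
  have "1 + Ssum * u\<^sup>2 \<le> (1 + Ssum) * (1 + \<bar>u\<bar>)\<^sup>2"
  proof -
    have "\<bar>u\<bar>\<^sup>2 \<le> (1 + \<bar>u\<bar>)\<^sup>2" by (rule power_mono) auto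
    then have uu: "u\<^sup>2 \<le> (1 + \<bar>u\<bar>)\<^sup>2" by simp
    have "1\<^sup>2 \<le> (1 + \<bar>u\<bar>)\<^sup>2" by (rule power_mono) auto
    then have one: "1 \<le> (1 + \<bar>u\<bar>)\<^sup>2" by simp
    have "Ssum * u\<^sup>2 \<le> Ssum * (1 + \<bar>u\<bar>)\<^sup>2" using uu S by (rule mult_left_mono)
    then have "1 + Ssum * u\<^sup>2 \<le> (1 + \<bar>u\<bar>)\<^sup>2 + Ssum * (1 + \<bar>u\<bar>)\<^sup>2" using one by linarith
    also have "\<dots> = (1 + Ssum) * (1 + \<bar>u\<bar>)\<^sup>2" by (simp add: distrib_right)
    finally show ?thesis .
  qed
  then have "ln (1 + Ssum * u\<^sup>2) \<le> ln ((1 + Ssum) * (1 + \<bar>u\<bar>)\<^sup>2)"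
    using S by (intro ln_mono) (auto intro: add_pos_nonneg)
  also have "\<dots> = ln (1 + Ssum) + 2 * ln (1 + \<bar>u\<bar>)"
    using S by (simp add: ln_mult ln_realpow)
  finally show ?thesis .
qed

lemma W_bound:
  assumes x: "x \<in> Theta p" and u: "u \<noteq> 0"
  shows "\<bar>ln (wfun p b x u)\<bar> \<le> Cw + Dl u"
proof -
  let ?w = "wfun p b x u"
  have wpos: "?w > 0" by (rule w_pos[OF x u])
  have lw: "ln ?w = ln (?w\<^sup>2) / 2" using wpos by (simp add: ln_realpow)
  have c: "cmin > 0" by (rule cmin_pos)
  have "ln (?w\<^sup>2) \<ge> ln (cmin * u\<^sup>2)"
    using w_lower[OF x, of u] c u by (intro ln_mono) auto
  also have "ln (cmin * u\<^sup>2) = ln cmin + 2 * ln \<bar>u\<bar>"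
    using c u by (simp add: ln_mult ln_sq)
  finally have lo: "ln (?w\<^sup>2) \<ge> ln cmin + 2 * ln \<bar>u\<bar>" .
  have "ln (?w\<^sup>2) \<le> ln (Ssum * u\<^sup>2 + 1)"
    using w_upper[OF x, of u] wpos by (intro ln_mono) auto
  also have "\<dots> \<le> ln (1 + Ssum) + 2 * ln (1 + \<bar>u\<bar>)" using ln_sq_bound[of u] by (simp add: add.commute)
  finally have hi: "ln (?w\<^sup>2) \<le> ln (1 + Ssum) + 2 * ln (1 + \<bar>u\<bar>)" .
  have l1: "ln (1 + Ssum) \<ge> 0" using Ssum_nonneg by simp
  have l2: "ln (1 + \<bar>u\<bar>) \<ge> 0" by simp
  show ?thesis unfolding Cw_def Dl_def abs_le_iff using lo hi lw l1 l2
      abs_ge_self[of "ln cmin"] abs_ge_minus_self[of "ln cmin"]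
      abs_ge_self[of "ln \<bar>u\<bar>"] abs_ge_minus_self[of "ln \<bar>u\<bar>"] by linarith
qed

lemma Kp_bound:
  assumes u: "u \<noteq> 0"
  shows "Kp u \<le> Ck + 2 * Dl u"
proof -
  have c: "cmin > 0" by (rule cmin_pos)
  have "ln (real p * beta u) = ln (real p) + ln (beta u)"
    using p1 beta_ge1[of u] by (intro ln_mult_pos) auto
  also have "ln (beta u) \<le> ln (1 + Ssum) + 2 * ln (1 + \<bar>u\<bar>)"
    unfolding beta_def by (rule ln_sq_bound)
  finally have a: "ln (real p * beta u) \<le> ln (real p) + ln (1 + Ssum) + 2 * ln (1 + \<bar>u\<bar>)" by simp
  have b: "- ln (gam u) \<le> \<bar>ln cmin\<bar> + 2 * \<bar>ln \<bar>u\<bar>\<bar>"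
  proof (cases "cmin * u\<^sup>2 \<le> 1")
    case True
    then have "gam u = cmin * u\<^sup>2" unfolding gam_def by simp
    then have "ln (gam u) = ln cmin + 2 * ln \<bar>u\<bar>"
      using c u by (simp add: ln_mult ln_sq)
    then show ?thesis by (auto simp: abs_le_iff)
  next
    case False
    then have "gam u = 1" unfolding gam_def by simp
    then show ?thesis by simp
  qed
  show ?thesis using a b unfolding Kp_def Ck_def Dl_def by (simp add: abs_le_iff)
qed

lemma int_bound:
  assumes g[measurable]: "g \<in> borel_measurable borel" and bd: "\<And>u. u \<noteq> 0 \<Longrightarrow> g u \<le> C + D * Dl u"
    and D: "D \<ge> 0"
  shows "(\<integral>\<^sup>+u. ennreal (g u) \<partial>F) \<le> ennreal (max 0 C) + ennreal D * (\<integral>\<^sup>+u. ennreal (Dl u) \<partial>F)"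
proof -
  have "(\<integral>\<^sup>+u. ennreal (g u) \<partial>F) \<le> (\<integral>\<^sup>+u. ennreal (max 0 C) + ennreal D * ennreal (Dl u) \<partial>F)"
  proof (intro nn_integral_mono_AE, rule AE_mp[OF AE_F_nz], intro AE_I2 impI)
    fix u :: real assume u: "u \<noteq> 0"
    have "ennreal (g u) \<le> ennreal (max 0 C + D * Dl u)"
      using bd[OF u] by (intro ennreal_leI) auto
    also have "\<dots> = ennreal (max 0 C) + ennreal D * ennreal (Dl u)"
      using D Dl_nonneg[of u] by (simp add: ennreal_plus ennreal_mult)
    finally show "ennreal (g u) \<le> ennreal (max 0 C) + ennreal D * ennreal (Dl u)" .
  qed
  also have "\<dots> = (\<integral>\<^sup>+u. ennreal (max 0 C) \<partial>F) + (\<integral>\<^sup>+u. ennreal D * ennreal (Dl u) \<partial>F)"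
    by (intro nn_integral_add) (auto simp: Dl_def)
  also have "\<dots> = ennreal (max 0 C) + ennreal D * (\<integral>\<^sup>+u. ennreal (Dl u) \<partial>F)"
    by (subst nn_integral_cmult) (auto simp: Dl_def FF.emeasure_space_1)
  finally show ?thesis .
qed

lemma fin_bound: "ennreal (max 0 C) + ennreal D * (\<integral>\<^sup>+u. ennreal (Dl u) \<partial>F) < \<infinity>"
proof -
  have "ennreal D * (\<integral>\<^sup>+u. ennreal (Dl u) \<partial>F) < \<infinity>"
    using int_Dl by (metis ennreal_less_top ennreal_mult_less_top infinity_ennreal_def)
  then show ?thesis unfolding ennreal_add_less_top by (simp add: infinity_ennreal_def)
qed

lemma int_W:
  assumes x: "x \<in> Theta p"
  shows "(\<integral>\<^sup>+u. ennreal \<bar>ln (wfun p b x u)\<bar> \<partial>F) < \<infinity>"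
proof -
  have x': "x \<in> space (state_space p)" using x unfolding Theta_def by simp
  have wm[measurable]: "wfun p b x \<in> borel_measurable borel"
    using measurable_Pair2[OF wfun_meas x'] by (simp add: comp_def)
  have m: "(\<lambda>u. \<bar>ln (wfun p b x u)\<bar>) \<in> borel_measurable borel" by measurable
  have "(\<integral>\<^sup>+u. ennreal \<bar>ln (wfun p b x u)\<bar> \<partial>F) \<le> ennreal (max 0 Cw) + ennreal 1 * (\<integral>\<^sup>+u. ennreal (Dl u) \<partial>F)"
    by (rule int_bound[OF m]) (use W_bound[OF x] in auto)
  then show ?thesis using fin_bound[of Cw 1] by (rule le_less_trans)
qed

lemma int_Kp: "(\<integral>\<^sup>+u. ennreal (Kp u) \<partial>F) < \<infinity>"
proof -
  have m: "Kp \<in> borel_measurable borel" unfolding Kp_def beta_def gam_def by measurable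
  have "(\<integral>\<^sup>+u. ennreal (Kp u) \<partial>F) \<le> ennreal (max 0 Ck) + ennreal 2 * (\<integral>\<^sup>+u. ennreal (Dl u) \<partial>F)"
    by (rule int_bound[OF m]) (use Kp_bound in auto)
  then show ?thesis using fin_bound[of Ck 2] by (rule le_less_trans)
qed

end

context arch_prob
begin

definition Wp :: "(nat \<Rightarrow> real) \<Rightarrow> real \<Rightarrow> real" where "Wp x u = max 0 (ln (wfun p b x u))"
definition Wm :: "(nat \<Rightarrow> real) \<Rightarrow> real \<Rightarrow> real" where "Wm x u = max 0 (- ln (wfun p b x u))"
definition Bw :: ennreal where "Bw = ennreal (max 0 Cw) + ennreal 1 * (\<integral>\<^sup>+u. ennreal (Dl u) \<partial>F)"
definition Ip :: ennreal where "Ip = (\<integral>\<^sup>+x. \<integral>\<^sup>+u. ennreal (Wp x u) \<partial>F \<partial>Stat)"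
definition Im :: ennreal where "Im = (\<integral>\<^sup>+x. \<integral>\<^sup>+u. ennreal (Wm x u) \<partial>F \<partial>Stat)"
definition Lam :: real where "Lam = enn2real Ip - enn2real Im"

lemma Bw_fin: "Bw < \<infinity>" unfolding Bw_def by (rule fin_bound)

lemma wfun_meas_x:
  assumes x': "x \<in> space (state_space p)"
  shows "wfun p b x \<in> borel_measurable borel"
  using measurable_Pair2[OF wfun_meas x'] by (simp add: comp_def)

lemma W_int_le:
  assumes x: "x \<in> Theta p"
  shows "(\<integral>\<^sup>+u. ennreal \<bar>ln (wfun p b x u)\<bar> \<partial>F) \<le> Bw"
proof -
  have x': "x \<in> space (state_space p)" using x unfolding Theta_def by simp
  note wm[measurable] = wfun_meas_x[OF x']
  have m: "(\<lambda>u. \<bar>ln (wfun p b x u)\<bar>) \<in> borel_measurable borel" by measurable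
  show ?thesis unfolding Bw_def
    by (rule int_bound[OF m]) (use W_bound[OF x] in auto)
qed

lemma Wp_le: "Wp x u \<le> \<bar>ln (wfun p b x u)\<bar>" unfolding Wp_def by simp
lemma Wm_le: "Wm x u \<le> \<bar>ln (wfun p b x u)\<bar>" unfolding Wm_def by simp
lemma Wp_nonneg: "Wp x u \<ge> 0" unfolding Wp_def by simp
lemma Wm_nonneg: "Wm x u \<ge> 0" unfolding Wm_def by simp
lemma W_split: "ln (wfun p b x u) = Wp x u - Wm x u" unfolding Wp_def Wm_def by simp

lemma Wp_meas[measurable]: "(\<lambda>\<omega>. Wp (fst \<omega>) (snd \<omega>)) \<in> borel_measurable (state_space p \<Otimes>\<^sub>M borel)"
  unfolding Wp_def by measurable
lemma Wm_meas[measurable]: "(\<lambda>\<omega>. Wm (fst \<omega>) (snd \<omega>)) \<in> borel_measurable (state_space p \<Otimes>\<^sub>M borel)"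
  unfolding Wm_def by measurable

lemma sSF: "sets (state_space p \<Otimes>\<^sub>M F) = sets (state_space p \<Otimes>\<^sub>M borel)"
  by (rule sets_pair_measure_cong[OF refl sets_F])

lemma Phi_meas:
  assumes G: "(\<lambda>\<omega>. G (fst \<omega>) (snd \<omega>)) \<in> borel_measurable (state_space p \<Otimes>\<^sub>M borel)"
  shows "(\<lambda>x. \<integral>\<^sup>+u. ennreal (G x u) \<partial>F) \<in> borel_measurable Stat"
proof -
  have "(\<lambda>\<omega>. ennreal (G (fst \<omega>) (snd \<omega>))) \<in> borel_measurable (state_space p \<Otimes>\<^sub>M F)"
    using G measurable_cong_sets[OF sSF refl, of borel] by simp
  then have "(\<lambda>x. \<integral>\<^sup>+u. ennreal (G x u) \<partial>F) \<in> borel_measurable (state_space p)"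
    using FF.borel_measurable_nn_integral_fst by simp
  then show ?thesis using measurable_cong_sets[OF sets_Stat refl, of borel] by simp
qed

lemma Phi_le:
  assumes x: "x \<in> Theta p" and le: "\<And>u. G x u \<le> \<bar>ln (wfun p b x u)\<bar>"
  shows "(\<integral>\<^sup>+u. ennreal (G x u) \<partial>F) \<le> Bw"
proof -
  have "(\<integral>\<^sup>+u. ennreal (G x u) \<partial>F) \<le> (\<integral>\<^sup>+u. ennreal \<bar>ln (wfun p b x u)\<bar> \<partial>F)"
    using le by (intro nn_integral_mono ennreal_leI) auto
  also have "\<dots> \<le> Bw" by (rule W_int_le[OF x])
  finally show ?thesis .
qed

lemma I_fin:
  assumes G: "(\<lambda>\<omega>. G (fst \<omega>) (snd \<omega>)) \<in> borel_measurable (state_space p \<Otimes>\<^sub>M borel)"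
    and le: "\<And>x u. G x u \<le> \<bar>ln (wfun p b x u)\<bar>"
  shows "(\<integral>\<^sup>+x. \<integral>\<^sup>+u. ennreal (G x u) \<partial>F \<partial>Stat) < \<infinity>"
proof -
  have "(\<integral>\<^sup>+x. \<integral>\<^sup>+u. ennreal (G x u) \<partial>F \<partial>Stat) \<le> (\<integral>\<^sup>+x. Bw \<partial>Stat)"
    by (intro nn_integral_mono_AE, rule AE_mp[OF AE_Theta], intro AE_I2 impI Phi_le le)
  also have "\<dots> = Bw" by (simp add: SS.emeasure_space_1)
  finally show ?thesis using Bw_fin by (simp add: le_less_trans)
qed

lemma Ip_fin: "Ip < \<infinity>" unfolding Ip_def by (rule I_fin[OF Wp_meas Wp_le])
lemma Im_fin: "Im < \<infinity>" unfolding Im_def by (rule I_fin[OF Wm_meas Wm_le])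

lemma enn2real_int:
  assumes G: "(\<lambda>\<omega>. G (fst \<omega>) (snd \<omega>)) \<in> borel_measurable (state_space p \<Otimes>\<^sub>M borel)"
    and le: "\<And>x u. G x u \<le> \<bar>ln (wfun p b x u)\<bar>"
  shows "integrable Stat (\<lambda>x. enn2real (\<integral>\<^sup>+u. ennreal (G x u) \<partial>F))"
    and "(\<integral>x. enn2real (\<integral>\<^sup>+u. ennreal (G x u) \<partial>F) \<partial>Stat) = enn2real (\<integral>\<^sup>+x. \<integral>\<^sup>+u. ennreal (G x u) \<partial>F \<partial>Stat)"
proof -
  note m[measurable] = Phi_meas[OF G]
  have ae: "AE x in Stat. ennreal (enn2real (\<integral>\<^sup>+u. ennreal (G x u) \<partial>F)) = (\<integral>\<^sup>+u. ennreal (G x u) \<partial>F)"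
  proof (rule AE_mp[OF AE_Theta], intro AE_I2 impI)
    fix x assume x: "x \<in> Theta p"
    have "(\<integral>\<^sup>+u. ennreal (G x u) \<partial>F) < \<infinity>" using Phi_le[where G=G, OF x le] Bw_fin by (rule le_less_trans)
    then show "ennreal (enn2real (\<integral>\<^sup>+u. ennreal (G x u) \<partial>F)) = (\<integral>\<^sup>+u. ennreal (G x u) \<partial>F)"
      by simp
  qed
  have eq: "(\<integral>\<^sup>+x. ennreal (enn2real (\<integral>\<^sup>+u. ennreal (G x u) \<partial>F)) \<partial>Stat) = (\<integral>\<^sup>+x. \<integral>\<^sup>+u. ennreal (G x u) \<partial>F \<partial>Stat)"
    using ae by (rule nn_integral_cong_AE)
  show "integrable Stat (\<lambda>x. enn2real (\<integral>\<^sup>+u. ennreal (G x u) \<partial>F))"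
    by (rule integrableI_bounded) (use eq I_fin[OF G le] in auto)
  show "(\<integral>x. enn2real (\<integral>\<^sup>+u. ennreal (G x u) \<partial>F) \<partial>Stat) = enn2real (\<integral>\<^sup>+x. \<integral>\<^sup>+u. ennreal (G x u) \<partial>F \<partial>Stat)"
    by (subst integral_eq_nn_integral) (auto simp: eq)
qed

lemma inner_eq:
  assumes x: "x \<in> Theta p"
  shows "(\<integral>u. ln (wfun p b x u) * f u \<partial>lborel) = enn2real (\<integral>\<^sup>+u. ennreal (Wp x u) \<partial>F) - enn2real (\<integral>\<^sup>+u. ennreal (Wm x u) \<partial>F)"
proof -
  have x': "x \<in> space (state_space p)" using x unfolding Theta_def by simp
  note wm[measurable] = wfun_meas_x[OF x']
  have mp[measurable]: "Wp x \<in> borel_measurable borel" unfolding Wp_def by measurable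
  have mm[measurable]: "Wm x \<in> borel_measurable borel" unfolding Wm_def by measurable
  have ip: "integrable F (Wp x)"
  proof (rule integrableI_bounded)
    show "(\<integral>\<^sup>+u. ennreal (norm (Wp x u)) \<partial>F) < \<infinity>"
      using Phi_le[OF x, of Wp] Wp_le Bw_fin Wp_nonneg by (simp add: le_less_trans)
  qed measurable
  have im: "integrable F (Wm x)"
  proof (rule integrableI_bounded)
    show "(\<integral>\<^sup>+u. ennreal (norm (Wm x u)) \<partial>F) < \<infinity>"
      using Phi_le[OF x, of Wm] Wm_le Bw_fin Wm_nonneg by (simp add: le_less_trans)
  qed measurable
  have "(\<integral>u. ln (wfun p b x u) * f u \<partial>lborel) = (\<integral>u. f u *\<^sub>R ln (wfun p b x u) \<partial>lborel)"
    by (simp add: mult.commute)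
  also have "\<dots> = (\<integral>u. ln (wfun p b x u) \<partial>F)"
    unfolding F_def by (rule integral_density[symmetric]) (auto simp: f_nonneg)
  also have "\<dots> = (\<integral>u. Wp x u - Wm x u \<partial>F)" by (simp add: W_split)
  also have "\<dots> = (\<integral>u. Wp x u \<partial>F) - (\<integral>u. Wm x u \<partial>F)" using ip im by simp
  also have "(\<integral>u. Wp x u \<partial>F) = enn2real (\<integral>\<^sup>+u. ennreal (Wp x u) \<partial>F)"
    by (rule integral_eq_nn_integral) (auto simp: Wp_nonneg)
  also have "(\<integral>u. Wm x u \<partial>F) = enn2real (\<integral>\<^sup>+u. ennreal (Wm x u) \<partial>F)"
    by (rule integral_eq_nn_integral) (auto simp: Wm_nonneg)
  finally show ?thesis .
qed

lemma LAMBDA: "ln (rho p b f Stat) = Lam"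
proof -
  have meas_in: "(\<lambda>x. \<integral>u. ln (wfun p b x u) * f u \<partial>lborel) \<in> borel_measurable Stat"
  proof -
    have "(\<lambda>\<omega>. ln (wfun p b (fst \<omega>) (snd \<omega>)) * f (snd \<omega>)) \<in> borel_measurable (state_space p \<Otimes>\<^sub>M lborel)"
      by measurable
    then have "(\<lambda>x. \<integral>u. ln (wfun p b x u) * f u \<partial>lborel) \<in> borel_measurable (state_space p)"
      using lborel.borel_measurable_lebesgue_integral[of "\<lambda>x u. ln (wfun p b x u) * f u" "state_space p"] by simp
    then show ?thesis using measurable_cong_sets[OF sets_Stat refl, of borel] by simp
  qed
  note i1 = enn2real_int[OF Wp_meas Wp_le] and i2 = enn2real_int[OF Wm_meas Wm_le]
  note m1[measurable] = Phi_meas[OF Wp_meas] and m2[measurable] = Phi_meas[OF Wm_meas]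
  have "(\<integral>x. \<integral>u. ln (wfun p b x u) * f u \<partial>lborel \<partial>Stat)
      = (\<integral>x. enn2real (\<integral>\<^sup>+u. ennreal (Wp x u) \<partial>F) - enn2real (\<integral>\<^sup>+u. ennreal (Wm x u) \<partial>F) \<partial>Stat)"
    by (rule integral_cong_AE[OF meas_in], measurable, rule AE_mp[OF AE_Theta], intro AE_I2 impI inner_eq)
  also have "\<dots> = Lam" using i1 i2 unfolding Lam_def Ip_def Im_def by simp
  finally show ?thesis unfolding rho_def by simp
qed

end

context arch_prob
begin

lemma Mprod_meas: "(\<lambda>es. Mprod p b es n i j) \<in> borel_measurable (PF T)"
proof (induction n arbitrary: i j)
  case 0 then show ?case by simp
next
  case (Suc n)
  note comp_PF[measurable] Suc.IH[measurable]
  show ?case by (simp add: matmul_def Bmat_def) measurable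
qed

lemma frob_meas: "(\<lambda>es. ln (frob p (Mprod p b es n))) \<in> borel_measurable (PF T)"
proof -
  note Mprod_meas[measurable]
  show ?thesis unfolding frob_def by measurable
qed

lemma MARG1:
  assumes g[measurable]: "g \<in> borel_measurable borel" and s: "1 \<le> s" "s \<le> T"
  shows "(\<integral>\<^sup>+es. g (es s) \<partial>PF T) = (\<integral>\<^sup>+u. g u \<partial>F)"
proof -
  have hm: "\<And>T'. (\<lambda>es. g (es s)) \<in> borel_measurable (PF T')"
    using comp_PF by measurable
  have "(\<integral>\<^sup>+es. g (es s) \<partial>PF T) = (\<integral>\<^sup>+es. g (es s) \<partial>PF s)"
    using s by (intro MARG[OF hm]) auto
  also obtain s' where s': "s = Suc s'" using s by (cases s) auto
  have "(\<integral>\<^sup>+es. g (es s) \<partial>PF (Suc s')) = (\<integral>\<^sup>+es. \<integral>\<^sup>+y. g ((es(Suc s' := y)) s) \<partial>F \<partial>PF s')"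
    by (rule ins_step[OF hm])
  then have "(\<integral>\<^sup>+es. g (es s) \<partial>PF s) = (\<integral>\<^sup>+es. \<integral>\<^sup>+y. g y \<partial>F \<partial>PF s')"
    using s' by simp
  also have "\<dots> = (\<integral>\<^sup>+u. g u \<partial>F)" using PF_space1[of s'] by simp
  finally show ?thesis .
qed

lemma AE_PF_nz: "AE es in PF T. \<forall>s\<in>{1..T}. es s \<noteq> 0"
proof (rule AE_finite_allI)
  fix s assume s: "s \<in> {1..T}"
  have F0: "emeasure F {0} = 0"
    using AE_F_nz by (subst (asm) AE_iff_measurable[of "{0}"]) (auto simp: space_F sets_F)
  have m: "{es \<in> space (PF T). es s = 0} \<in> sets (PF T)"
    using comp_PF by measurable
  have "emeasure (PF T) {es \<in> space (PF T). es s = 0} = (\<integral>\<^sup>+es. indicator {es \<in> space (PF T). es s = 0} es \<partial>PF T)"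
    by (rule nn_integral_indicator[symmetric, OF m])
  also have "\<dots> = (\<integral>\<^sup>+es. indicator {0} (es s) \<partial>PF T)"
    by (intro nn_integral_cong) (auto simp: indicator_def)
  also have "\<dots> = (\<integral>\<^sup>+u. indicator {0} u \<partial>F)"
    using s by (intro MARG1) auto
  also have "\<dots> = 0" using F0 by (simp add: sets_F)
  finally show "AE es in PF T. es s \<noteq> 0"
    using m by (subst AE_iff_measurable[OF m]) auto
qed simp

definition Zc :: real where "Zc = ln (real p) + real p * enn2real (\<integral>\<^sup>+u. ennreal (Kp u) \<partial>F)"

lemma Kp_meas[measurable]: "Kp \<in> borel_measurable borel"
  unfolding Kp_def beta_def gam_def by measurable

context
  fixes T :: nat
  assumes T: "T \<ge> p"
begin

interpretation P: pair_sigma_finite "PF T" Stat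
  using PF_prob by (intro pair_sigma_finite.intro) (auto intro: prob_space_imp_sigma_finite SS.sigma_finite_measure_axioms)

interpretation Q: prob_space "PF T \<Otimes>\<^sub>M Stat"
  using PF_prob Stat_prob by (rule prob_space_pair)

lemma sQ: "sets (PF T \<Otimes>\<^sub>M Stat) = sets (PF T \<Otimes>\<^sub>M state_space p)"
  by (rule sets_pair_measure_cong[OF refl sets_Stat])

lemma thQ[measurable]: "(\<lambda>\<omega>. th p b (snd \<omega>) (fst \<omega>) n) \<in> measurable (PF T \<Otimes>\<^sub>M Stat) (state_space p)"
  using th_meas[of T n] measurable_cong_sets[OF sQ refl, of "state_space p"] by simp

lemma compQ[measurable]: "(\<lambda>\<omega>. fst \<omega> k) \<in> borel_measurable (PF T \<Otimes>\<^sub>M Stat)"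
  by (rule measurable_compose[OF measurable_fst comp_PF])

lemma Q_term:
  assumes G: "(\<lambda>\<omega>. G (fst \<omega>) (snd \<omega>)) \<in> borel_measurable (state_space p \<Otimes>\<^sub>M borel)"
    and nn: "\<And>x u. G x u \<ge> 0" and s: "s < T"
    and fin: "(\<integral>\<^sup>+x. \<integral>\<^sup>+u. ennreal (G x u) \<partial>F \<partial>Stat) < \<infinity>"
  shows "integrable (PF T \<Otimes>\<^sub>M Stat) (\<lambda>\<omega>. G (th p b (snd \<omega>) (fst \<omega>) s) (fst \<omega> (Suc s)))"
    and "(\<integral>\<omega>. G (th p b (snd \<omega>) (fst \<omega>) s) (fst \<omega> (Suc s)) \<partial>(PF T \<Otimes>\<^sub>M Stat))
          = enn2real (\<integral>\<^sup>+x. \<integral>\<^sup>+u. ennreal (G x u) \<partial>F \<partial>Stat)"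
proof -
  note G[measurable]
  have m: "(\<lambda>\<omega>. G (th p b (snd \<omega>) (fst \<omega>) s) (fst \<omega> (Suc s))) \<in> borel_measurable (PF T \<Otimes>\<^sub>M Stat)"
  proof -
    have "(\<lambda>\<omega>. (th p b (snd \<omega>) (fst \<omega>) s, fst \<omega> (Suc s))) \<in> measurable (PF T \<Otimes>\<^sub>M Stat) (state_space p \<Otimes>\<^sub>M borel)"
      by measurable
    from measurable_compose[OF this G] show ?thesis by simp
  qed
  have Gm: "(\<lambda>\<omega>. ennreal (G (fst \<omega>) (snd \<omega>))) \<in> borel_measurable (state_space p \<Otimes>\<^sub>M borel)" by measurable
  have eq: "(\<integral>\<^sup>+\<omega>. ennreal (G (th p b (snd \<omega>) (fst \<omega>) s) (fst \<omega> (Suc s))) \<partial>(PF T \<Otimes>\<^sub>M Stat))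
      = (\<integral>\<^sup>+x. \<integral>\<^sup>+u. ennreal (G x u) \<partial>F \<partial>Stat)"
  proof -
    have "(\<integral>\<^sup>+\<omega>. ennreal (G (th p b (snd \<omega>) (fst \<omega>) s) (fst \<omega> (Suc s))) \<partial>(PF T \<Otimes>\<^sub>M Stat))
        = (\<integral>\<^sup>+x. \<integral>\<^sup>+es. ennreal (G (th p b x es s) (es (Suc s))) \<partial>PF T \<partial>Stat)"
      using m by (subst P.nn_integral_snd[symmetric]) auto
    also have "\<dots> = (\<integral>\<^sup>+x. \<integral>\<^sup>+u. ennreal (G x u) \<partial>F \<partial>Stat)"
      using KEY[OF Gm s] by simp
    finally show ?thesis .
  qed
  show "integrable (PF T \<Otimes>\<^sub>M Stat) (\<lambda>\<omega>. G (th p b (snd \<omega>) (fst \<omega>) s) (fst \<omega> (Suc s)))"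
    by (rule integrableI_bounded[OF m]) (use eq fin nn in simp)
  show "(\<integral>\<omega>. G (th p b (snd \<omega>) (fst \<omega>) s) (fst \<omega> (Suc s)) \<partial>(PF T \<Otimes>\<^sub>M Stat))
          = enn2real (\<integral>\<^sup>+x. \<integral>\<^sup>+u. ennreal (G x u) \<partial>F \<partial>Stat)"
    using m by (subst integral_eq_nn_integral) (auto simp: nn eq)
qed

definition Ws :: "nat \<Rightarrow> (nat \<Rightarrow> real) \<times> (nat \<Rightarrow> real) \<Rightarrow> real" where
  "Ws s \<omega> = ln (wfun p b (th p b (snd \<omega>) (fst \<omega>) s) (fst \<omega> (Suc s)))"

lemma Ws_int:
  assumes s: "s < T"
  shows "integrable (PF T \<Otimes>\<^sub>M Stat) (Ws s)" and "(\<integral>\<omega>. Ws s \<omega> \<partial>(PF T \<Otimes>\<^sub>M Stat)) = Lam"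
proof -
  note a = Q_term[OF Wp_meas Wp_nonneg s Ip_fin[unfolded Ip_def]]
  note b = Q_term[OF Wm_meas Wm_nonneg s Im_fin[unfolded Im_def]]
  have eq: "Ws s = (\<lambda>\<omega>. Wp (th p b (snd \<omega>) (fst \<omega>) s) (fst \<omega> (Suc s)) - Wm (th p b (snd \<omega>) (fst \<omega>) s) (fst \<omega> (Suc s)))"
    unfolding Ws_def by (simp add: W_split fun_eq_iff)
  show "integrable (PF T \<Otimes>\<^sub>M Stat) (Ws s)" unfolding eq using a(1) b(1) by simp
  show "(\<integral>\<omega>. Ws s \<omega> \<partial>(PF T \<Otimes>\<^sub>M Stat)) = Lam"
    unfolding eq using a b by (simp add: Lam_def Ip_def Im_def)
qed

definition g2 :: "(nat \<Rightarrow> real) \<times> (nat \<Rightarrow> real) \<Rightarrow> real" where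
  "g2 \<omega> = 2 * (\<Sum>s<T. Ws s \<omega>)"

lemma g2_int: "integrable (PF T \<Otimes>\<^sub>M Stat) g2" and g2_eq: "(\<integral>\<omega>. g2 \<omega> \<partial>(PF T \<Otimes>\<^sub>M Stat)) = 2 * real T * Lam"
proof -
  have i: "\<And>s. s \<in> {..<T} \<Longrightarrow> integrable (PF T \<Otimes>\<^sub>M Stat) (Ws s)" using Ws_int by auto
  show "integrable (PF T \<Otimes>\<^sub>M Stat) g2" unfolding g2_def using i by auto
  have "(\<integral>\<omega>. g2 \<omega> \<partial>(PF T \<Otimes>\<^sub>M Stat)) = 2 * (\<Sum>s<T. \<integral>\<omega>. Ws s \<omega> \<partial>(PF T \<Otimes>\<^sub>M Stat))"
    unfolding g2_def using i by (simp add: integral_sum)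
  also have "\<dots> = 2 * real T * Lam" using Ws_int(2) by simp
  finally show "(\<integral>\<omega>. g2 \<omega> \<partial>(PF T \<Otimes>\<^sub>M Stat)) = 2 * real T * Lam" .
qed

definition Zf :: "(nat \<Rightarrow> real) \<times> (nat \<Rightarrow> real) \<Rightarrow> real" where
  "Zf \<omega> = ln (real p) + (\<Sum>s\<in>{1..p}. Kp (fst \<omega> s))"

lemma Kp_term:
  assumes s: "s \<in> {1..p}"
  shows "integrable (PF T \<Otimes>\<^sub>M Stat) (\<lambda>\<omega>. Kp (fst \<omega> s))"
    and "(\<integral>\<omega>. Kp (fst \<omega> s) \<partial>(PF T \<Otimes>\<^sub>M Stat)) = enn2real (\<integral>\<^sup>+u. ennreal (Kp u) \<partial>F)"
proof -
  have m: "(\<lambda>\<omega>. Kp (fst \<omega> s)) \<in> borel_measurable (PF T \<Otimes>\<^sub>M Stat)" by measurable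
  have eq: "(\<integral>\<^sup>+\<omega>. ennreal (Kp (fst \<omega> s)) \<partial>(PF T \<Otimes>\<^sub>M Stat)) = (\<integral>\<^sup>+u. ennreal (Kp u) \<partial>F)"
  proof -
    have "(\<integral>\<^sup>+\<omega>. ennreal (Kp (fst \<omega> s)) \<partial>(PF T \<Otimes>\<^sub>M Stat)) = (\<integral>\<^sup>+x. \<integral>\<^sup>+es. ennreal (Kp (es s)) \<partial>PF T \<partial>Stat)"
      using m by (subst P.nn_integral_snd[symmetric]) auto
    also have "\<dots> = (\<integral>\<^sup>+x. \<integral>\<^sup>+u. ennreal (Kp u) \<partial>F \<partial>Stat)"
      using s T by (subst MARG1) auto
    also have "\<dots> = (\<integral>\<^sup>+u. ennreal (Kp u) \<partial>F)" by (simp add: SS.emeasure_space_1)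
    finally show ?thesis .
  qed
  show "integrable (PF T \<Otimes>\<^sub>M Stat) (\<lambda>\<omega>. Kp (fst \<omega> s))"
    by (rule integrableI_bounded[OF m]) (use eq int_Kp Kp_nonneg in simp)
  show "(\<integral>\<omega>. Kp (fst \<omega> s) \<partial>(PF T \<Otimes>\<^sub>M Stat)) = enn2real (\<integral>\<^sup>+u. ennreal (Kp u) \<partial>F)"
    using m by (subst integral_eq_nn_integral) (auto simp: Kp_nonneg eq)
qed

lemma Zf_int: "integrable (PF T \<Otimes>\<^sub>M Stat) Zf" and Zf_eq: "(\<integral>\<omega>. Zf \<omega> \<partial>(PF T \<Otimes>\<^sub>M Stat)) = Zc"
proof -
  have i: "\<And>s. s \<in> {1..p} \<Longrightarrow> integrable (PF T \<Otimes>\<^sub>M Stat) (\<lambda>\<omega>. Kp (fst \<omega> s))" using Kp_term by auto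
  show "integrable (PF T \<Otimes>\<^sub>M Stat) Zf" unfolding Zf_def
    by (intro Bochner_Integration.integrable_add Bochner_Integration.integrable_sum Q.integrable_const i)
  have iS: "integrable (PF T \<Otimes>\<^sub>M Stat) (\<lambda>\<omega>. \<Sum>s\<in>{1..p}. Kp (fst \<omega> s))"
    by (intro Bochner_Integration.integrable_sum i)
  have e1: "(\<integral>\<omega>. Zf \<omega> \<partial>(PF T \<Otimes>\<^sub>M Stat)) = (\<integral>\<omega>. ln (real p) \<partial>(PF T \<Otimes>\<^sub>M Stat)) + (\<integral>\<omega>. (\<Sum>s\<in>{1..p}. Kp (fst \<omega> s)) \<partial>(PF T \<Otimes>\<^sub>M Stat))"
    unfolding Zf_def by (rule Bochner_Integration.integral_add[OF Q.integrable_const iS])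
  have e2: "(\<integral>\<omega>. ln (real p) \<partial>(PF T \<Otimes>\<^sub>M Stat)) = ln (real p)" by (simp add: Q.prob_space)
  have e3: "(\<integral>\<omega>. (\<Sum>s\<in>{1..p}. Kp (fst \<omega> s)) \<partial>(PF T \<Otimes>\<^sub>M Stat)) = (\<Sum>s\<in>{1..p}. \<integral>\<omega>. Kp (fst \<omega> s) \<partial>(PF T \<Otimes>\<^sub>M Stat))"
    by (rule Bochner_Integration.integral_sum) (rule i)
  have e4: "(\<Sum>s\<in>{1..p}. \<integral>\<omega>. Kp (fst \<omega> s) \<partial>(PF T \<Otimes>\<^sub>M Stat)) = real p * enn2real (\<integral>\<^sup>+u. ennreal (Kp u) \<partial>F)"
    using Kp_term(2) by simp
  show "(\<integral>\<omega>. Zf \<omega> \<partial>(PF T \<Otimes>\<^sub>M Stat)) = Zc" unfolding Zc_def e1 e2 e3 e4 ..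
qed


lemma Theta_Stat[measurable]: "Theta p \<in> sets Stat" using Theta_sets sets_Stat by simp

lemma AE_good: "AE \<omega> in PF T \<Otimes>\<^sub>M Stat. (\<forall>s\<in>{1..T}. fst \<omega> s \<noteq> 0) \<and> snd \<omega> \<in> Theta p"
proof -
  have S: "{\<omega> \<in> space (PF T \<Otimes>\<^sub>M Stat). (\<forall>s\<in>{1..T}. fst \<omega> s \<noteq> 0) \<and> snd \<omega> \<in> Theta p} \<in> sets (PF T \<Otimes>\<^sub>M Stat)"
    by measurable
  have A: "AE es in PF T. AE x in Stat. (\<forall>s\<in>{1..T}. es s \<noteq> 0) \<and> x \<in> Theta p"
  proof (rule AE_mp[OF AE_PF_nz], rule AE_I2, rule impI)
    fix es assume "\<forall>s\<in>{1..T}. es s \<noteq> 0"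
    then show "AE x in Stat. (\<forall>s\<in>{1..T}. es s \<noteq> 0) \<and> x \<in> Theta p" using AE_Theta by auto
  qed
  show ?thesis using P.AE_pair_measure[OF S] A by simp
qed

lemma pointwise:
  assumes es: "\<forall>s\<in>{1..T}. es s \<noteq> 0" and x: "x \<in> Theta p"
  shows "g2 (es, x) \<le> ln (frob p (Mprod p b es T)) + ln (real p)"
    and "ln (frob p (Mprod p b es T)) \<le> g2 (es, x) + Zf (es, x)"
proof -
  let ?S = "\<Sum>i<p. mv p (Mprod p b es T) (sqv x) i"
  have v: "\<forall>j<p. sqv x j \<ge> 0" "(\<Sum>j<p. sqv x j) = 1" using Theta_sum[OF x] by (auto simp: sqv_def)
  have Spos: "?S > 0" by (rule LA1(1)[OF x es])
  have Seq: "ln ?S = g2 (es, x)" unfolding g2_def Ws_def using LA1(2)[OF x es] by simp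
  have Sle: "?S \<le> real p * frob p (Mprod p b es T)" by (rule LA2[OF v])
  have fpos: "frob p (Mprod p b es T) > 0"
    using Spos Sle p1 by (metis mult_eq_0_iff not_less_iff_gr_or_eq of_nat_0_le_iff zero_less_mult_iff less_le_trans)
  have "ln ?S \<le> ln (real p * frob p (Mprod p b es T))" using Spos Sle by simp
  also have "\<dots> = ln (real p) + ln (frob p (Mprod p b es T))" using p1 fpos by (intro ln_mult_pos) auto
  finally show "g2 (es, x) \<le> ln (frob p (Mprod p b es T)) + ln (real p)" using Seq by simp
  show "ln (frob p (Mprod p b es T)) \<le> g2 (es, x) + Zf (es, x)"
    using LA3[OF v es T] Seq unfolding Zf_def by simp
qed

lemma g1_meas[measurable]: "(\<lambda>\<omega>. ln (frob p (Mprod p b (fst \<omega>) T))) \<in> borel_measurable (PF T \<Otimes>\<^sub>M Stat)"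
  by (rule measurable_compose[OF measurable_fst frob_meas])

lemma BOUND:
  shows "(\<integral>es. ln (frob p (Mprod p b es T)) \<partial>PF T) \<le> 2 * real T * Lam + Zc"
    and "2 * real T * Lam \<le> (\<integral>es. ln (frob p (Mprod p b es T)) \<partial>PF T) + ln (real p)"
proof -
  let ?g1 = "\<lambda>\<omega>. ln (frob p (Mprod p b (fst \<omega>) T))"
  let ?Q = "PF T \<Otimes>\<^sub>M Stat"
  have ae1: "AE \<omega> in ?Q. g2 \<omega> \<le> ?g1 \<omega> + ln (real p)"
    by (rule AE_mp[OF AE_good], intro AE_I2 impI) (use pointwise(1) in auto)
  have ae2: "AE \<omega> in ?Q. ?g1 \<omega> \<le> g2 \<omega> + Zf \<omega>"
    by (rule AE_mp[OF AE_good], intro AE_I2 impI) (use pointwise(2) in auto)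
  have Zf_nn: "Zf \<omega> \<ge> 0" for \<omega>
    unfolding Zf_def using p1 Kp_nonneg by (auto intro!: add_nonneg_nonneg sum_nonneg)
  have lp: "ln (real p) \<ge> 0" using p1 by simp
  have ih: "integrable ?Q (\<lambda>\<omega>. \<bar>g2 \<omega>\<bar> + ln (real p) + Zf \<omega>)"
    using g2_int Zf_int by (intro Bochner_Integration.integrable_add Q.integrable_const) auto
  have i1: "integrable ?Q ?g1"
  proof (rule Bochner_Integration.integrable_bound[OF ih g1_meas])
    show "AE \<omega> in ?Q. norm (?g1 \<omega>) \<le> norm (\<bar>g2 \<omega>\<bar> + ln (real p) + Zf \<omega>)"
      using ae1 ae2 proof eventually_elim
      case (elim \<omega>)
      then show ?case using Zf_nn[of \<omega>] lp by (simp add: abs_le_iff) linarith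
    qed
  qed
  have eqE: "(\<integral>es. ln (frob p (Mprod p b es T)) \<partial>PF T) = (\<integral>\<omega>. ?g1 \<omega> \<partial>?Q)"
  proof -
    have "(\<integral>es. ln (frob p (Mprod p b es T)) \<partial>PF T) = (\<integral>es. ln (frob p (Mprod p b es T)) \<partial>distr ?Q (PF T) fst)"
      using SS.distr_pair_fst[of "PF T"] by simp
    also have "\<dots> = (\<integral>\<omega>. ?g1 \<omega> \<partial>?Q)"
      by (rule integral_distr[OF measurable_fst frob_meas])
    finally show ?thesis .
  qed
  have "(\<integral>\<omega>. ?g1 \<omega> \<partial>?Q) \<le> (\<integral>\<omega>. g2 \<omega> + Zf \<omega> \<partial>?Q)"
    using i1 g2_int Zf_int ae2 by (intro integral_mono_AE) auto
  also have "\<dots> = 2 * real T * Lam + Zc" using g2_int Zf_int g2_eq Zf_eq by simp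
  finally show "(\<integral>es. ln (frob p (Mprod p b es T)) \<partial>PF T) \<le> 2 * real T * Lam + Zc" using eqE by simp
  have "2 * real T * Lam = (\<integral>\<omega>. g2 \<omega> \<partial>?Q)" using g2_eq by simp
  also have "\<dots> \<le> (\<integral>\<omega>. ?g1 \<omega> + ln (real p) \<partial>?Q)"
    using i1 g2_int ae1 by (intro integral_mono_AE) auto
  also have "\<dots> = (\<integral>\<omega>. ?g1 \<omega> \<partial>?Q) + ln (real p)" using i1 by (simp add: Q.prob_space)
  finally show "2 * real T * Lam \<le> (\<integral>es. ln (frob p (Mprod p b es T)) \<partial>PF T) + ln (real p)" using eqE by simp
qed

end

end

lemma Mprod_cong: "(\<forall>s\<in>{1..n}. es s = es' s) \<Longrightarrow> Mprod p b es n = Mprod p b es' n"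
  by (induction n) auto

lemma TRANSFER:
  fixes M :: "'w measure" and e :: "nat \<Rightarrow> 'w \<Rightarrow> real" and f :: "real \<Rightarrow> real" and g :: "(nat \<Rightarrow> real) \<Rightarrow> real"
  assumes M: "prob_space M"
    and e_indep: "prob_space.indep_vars M (\<lambda>_. borel) e {1..}"
    and e_dist: "\<forall>t\<ge>1. distributed M lborel (e t) (\<lambda>u. ennreal (f u))"
    and T: "T \<ge> 1"
    and g: "g \<in> borel_measurable (PiM {1..T} (\<lambda>_. density lborel (\<lambda>u. ennreal (f u))))"
  shows "(\<integral>es. g es \<partial>PiM {1..T} (\<lambda>_. density lborel (\<lambda>u. ennreal (f u)))) = (\<integral>\<omega>. g (\<lambda>i\<in>{1..T}. e i \<omega>) \<partial>M)"
proof -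
  interpret prob_space M by (rule M)
  let ?F = "density lborel (\<lambda>u. ennreal (f u))"
  have rv: "\<And>i. i \<in> {1..T} \<Longrightarrow> random_variable borel (e i)"
    using e_dist distributed_measurable by fastforce
  have ind: "indep_vars (\<lambda>_. borel) e {1..T}"
    using e_indep by (rule indep_vars_subset) auto
  have D: "distr M (PiM {1..T} (\<lambda>_. borel)) (\<lambda>x. \<lambda>i\<in>{1..T}. e i x) = PiM {1..T} (\<lambda>i. distr M borel (e i))"
    using indep_vars_iff_distr_eq_PiM'[where I="{1..T}" and M'="\<lambda>_. borel" and X=e] rv ind T by auto
  have Fi: "distr M borel (e i) = ?F" if i: "i \<in> {1..T}" for i
  proof -
    have "distr M borel (e i) = distr M lborel (e i)" by (rule distr_cong) auto
    also have "\<dots> = ?F" using e_dist i distributed_distr_eq_density by fastforce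
    finally show ?thesis .
  qed
  have P: "PiM {1..T} (\<lambda>i. distr M borel (e i)) = PiM {1..T} (\<lambda>_. ?F)"
    by (rule PiM_cong) (auto simp: Fi)
  have sP: "sets (PiM {1..T} (\<lambda>_. borel)) = sets (PiM {1..T} (\<lambda>_. ?F))"
    by (rule sets_PiM_cong) auto
  have gm: "g \<in> borel_measurable (PiM {1..T} (\<lambda>_. borel))"
    using g measurable_cong_sets[OF sP refl, of borel] by simp
  have Xm: "(\<lambda>x. \<lambda>i\<in>{1..T}. e i x) \<in> measurable M (PiM {1..T} (\<lambda>_. borel))"
    using rv by (intro measurable_restrict) auto
  have "(\<integral>es. g es \<partial>PiM {1..T} (\<lambda>_. ?F)) = (\<integral>es. g es \<partial>distr M (PiM {1..T} (\<lambda>_. borel)) (\<lambda>x. \<lambda>i\<in>{1..T}. e i x))"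
    using D P by simp
  also have "\<dots> = (\<integral>\<omega>. g (\<lambda>i\<in>{1..T}. e i \<omega>) \<partial>M)"
    by (rule integral_distr[OF Xm gm])
  finally show ?thesis .
qed

theorem mainTheorem17:
  fixes p :: nat and b :: "nat \<Rightarrow> real" and f :: "real \<Rightarrow> real"
    and M :: "'w measure" and e :: "nat \<Rightarrow> 'w \<Rightarrow> real"
    and Stat :: "(nat \<Rightarrow> real) measure"
  assumes p: "p \<ge> 1"
    and b_pos: "\<forall>i\<le>p. b i > 0"
    and f_meas: "f \<in> borel_measurable lborel"
    and f_nonneg: "\<forall>u. f u \<ge> 0"
    and f_dens: "(\<integral>\<^sup>+ u. ennreal (f u) \<partial>lborel) = 1"
    and A1_loc: "\<forall>K. compact K \<longrightarrow> (\<exists>c>0. \<forall>u\<in>K. f u \<ge> c)"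
    and A2_bdd: "\<exists>C. \<forall>u. (1 + \<bar>u\<bar>) * f u \<le> C"
    and A2_mom: "\<exists>r0>0. (\<integral>\<^sup>+ u. ennreal (\<bar>u\<bar> powr r0 * f u) \<partial>lborel) < \<infinity>"
    and M: "prob_space M"
    and e_indep: "prob_space.indep_vars M (\<lambda>_. borel) e {1..}"
    and e_dist: "\<forall>t\<ge>1. distributed M lborel (e t) (\<lambda>u. ennreal (f u))"
    and Pi_stat: "stationary_dist p b f Stat"
    and Pi_unique: "\<forall>Q. stationary_dist p b f Q \<longrightarrow> Q = Stat"
  shows "(\<lambda>t. prob_space.expectation M
                 (\<lambda>\<omega>. ln (frob p (Mprod p b (\<lambda>s. e s \<omega>) t))) / real t)
           \<longlonglongrightarrow> 2 * ln (rho p b f Stat)"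
proof -
  obtain C where C: "\<And>u. (1 + \<bar>u\<bar>) * f u \<le> C" using A2_bdd by blast
  have Cf: "\<And>u. f u \<le> C"
  proof -
    fix u
    have "f u \<le> (1 + \<bar>u\<bar>) * f u" using f_nonneg by (simp add: algebra_simps)
    then show "f u \<le> C" using C[of u] by linarith
  qed
  obtain r0 where r0: "r0 > 0" "(\<integral>\<^sup>+ u. ennreal (\<bar>u\<bar> powr r0 * f u) \<partial>lborel) < \<infinity>"
    using A2_mom by blast
  interpret arch_prob p b f Stat C r0
    using p b_pos f_meas f_nonneg f_dens Cf r0 Pi_stat by unfold_locales auto
  let ?E = "\<lambda>t. prob_space.expectation M (\<lambda>\<omega>. ln (frob p (Mprod p b (\<lambda>s. e s \<omega>) t)))"
  have E: "?E T = (\<integral>es. ln (frob p (Mprod p b es T)) \<partial>PF T)" if T: "T \<ge> p" for T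
  proof -
    have T1: "T \<ge> 1" using T p by simp
    have "(\<integral>es. ln (frob p (Mprod p b es T)) \<partial>PF T) = (\<integral>\<omega>. ln (frob p (Mprod p b (\<lambda>i\<in>{1..T}. e i \<omega>) T)) \<partial>M)"
      unfolding PF_def F_def
      by (rule TRANSFER[OF M e_indep e_dist T1]) (rule frob_meas[unfolded PF_def F_def])
    also have "\<dots> = ?E T"
      by (intro Bochner_Integration.integral_cong refl arg_cong[where f=ln] arg_cong[where f="frob p"] Mprod_cong) auto
    finally show ?thesis by simp
  qed
  have lo: "eventually (\<lambda>t. 2 * Lam - ln (real p) / real t \<le> ?E t / real t) sequentially"
    using eventually_ge_at_top[of p]
  proof eventually_elim
    case (elim T)
    have Tp: "real T > 0" using elim p by simp
    have "2 * real T * Lam \<le> ?E T + ln (real p)" using BOUND(2)[OF elim] E[OF elim] by simp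
    then have "(2 * real T * Lam - ln (real p)) / real T \<le> ?E T / real T"
      using Tp by (intro divide_right_mono) auto
    then show ?case using Tp by (simp add: diff_divide_distrib)
  qed
  have hi: "eventually (\<lambda>t. ?E t / real t \<le> 2 * Lam + Zc / real t) sequentially"
    using eventually_ge_at_top[of p]
  proof eventually_elim
    case (elim T)
    have Tp: "real T > 0" using elim p by simp
    have "?E T \<le> 2 * real T * Lam + Zc" using BOUND(1)[OF elim] E[OF elim] by simp
    then have "?E T / real T \<le> (2 * real T * Lam + Zc) / real T"
      using Tp by (intro divide_right_mono) auto
    then show ?case using Tp by (simp add: add_divide_distrib)
  qed
  have l1: "(\<lambda>t. 2 * Lam - ln (real p) / real t) \<longlonglongrightarrow> 2 * Lam"
    using tendsto_diff[OF tendsto_const lim_const_over_n[of "ln (real p)"]] by simp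
  have l2: "(\<lambda>t. 2 * Lam + Zc / real t) \<longlonglongrightarrow> 2 * Lam"
    using tendsto_add[OF tendsto_const lim_const_over_n[of Zc]] by simp
  have "(\<lambda>t. ?E t / real t) \<longlonglongrightarrow> 2 * Lam"
    by (rule tendsto_sandwich[OF lo hi l1 l2])
  then show ?thesis using LAMBDA by simp
qed


end
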